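(* There is an absolute constant $C>0$ and an algorithm which, given a set $S$ of arms with reward distributions supported on $[0,1]$ and means $\theta_1\ge\theta_2\ge\dots\ge\theta_{|S|}$ (indexing unknown to the algorithm), an integer $1\le K\le|S|$, and parameters $\tau\in(0,1/2]$ with $(1-\tau)K\ge1$, $\phi\in(0,1]$, $\delta\in(0,1/2]$, always makes at most $C\frac{|S|}{\phi^2}(\log\frac1\tau+\log\frac1\delta)$ pulls and, with probability at least $1-\delta$, outputs an arm $i\in S$ with $$\theta_i\in\left[\theta_K-\phi,\ \theta_{\lceil(1-\tau)K\rceil}+\phi\right].$$
   Context: Stochastic bandit model: each pull of an arm yields an independent sample from that arm's unknown distribution; the algorithm chooses pulls adaptively. *)

theory Defs
  imports "HOL-Probability.Probability"
begin

text \<open>Arms are labelled by natural numbers. A history is the list of (arm pulled, reward observed).\<close>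
type_synonym hist = "(nat \<times> real) list"

datatype action = Pull nat | Output nat

text \<open>A (randomised) algorithm: given the arm set S, K, tau, phi, delta, an internal
  random seed u (uniform on [0,1]) and the history so far, it either pulls an arm or
  stops and outputs an arm.\<close>
type_synonym algorithm = "nat set \<Rightarrow> nat \<Rightarrow> real \<Rightarrow> real \<Rightarrow> real \<Rightarrow> real \<Rightarrow> hist \<Rightarrow> action"

definition pulls :: "nat \<Rightarrow> hist \<Rightarrow> nat" where
  "pulls j h = length (filter (\<lambda>p. fst p = j) h)"

text \<open>Reward-table model of the stochastic bandit: T (j, c) is the reward obtained at the
  (c+1)-st pull of arm j; all entries are independent with T (j,c) distributed as arm j.\<close>
fun run :: "(hist \<Rightarrow> action) \<Rightarrow> (nat \<times> nat \<Rightarrow> real) \<Rightarrow> nat \<Rightarrow> hist \<Rightarrow> (nat \<times> hist) option" where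
  "run pol T 0 h = None"
| "run pol T (Suc n) h =
     (case pol h of
        Output i \<Rightarrow> Some (i, h)
      | Pull j \<Rightarrow> run pol T n (h @ [(j, T (j, pulls j h))]))"

definition kth_largest :: "nat set \<Rightarrow> (nat \<Rightarrow> real) \<Rightarrow> nat \<Rightarrow> real" where
  "kth_largest S \<theta> k = rev (sort (map \<theta> (sorted_list_of_set S))) ! (k - 1)"

definition mean :: "real measure \<Rightarrow> real" where
  "mean M = (\<integral>x. x \<partial>M)"

text \<open>Joint probability space: internal seed times the independent reward table.\<close>
definition bandit_space :: "nat set \<Rightarrow> (nat \<Rightarrow> real measure) \<Rightarrow> (real \<times> (nat \<times> nat \<Rightarrow> real)) measure" where
  "bandit_space S D = uniform_measure lborel {0..1} \<Otimes>\<^sub>M (\<Pi>\<^sub>M p\<in>S \<times> UNIV. D (fst p))"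

end

theory Submission
  imports Defs
begin


definition lowset :: "(nat \<Rightarrow> real) \<Rightarrow> nat set \<Rightarrow> nat \<Rightarrow> nat set" where
  "lowset f A q = set (take q (sort_key f (sorted_list_of_set A)))"

lemma lowset_subset: "finite A \<Longrightarrow> lowset f A q \<subseteq> A"
  unfolding lowset_def by (auto dest: in_set_takeD)

lemma card_lowset: "finite A \<Longrightarrow> card (lowset f A q) = min q (card A)"
proof -
  assume "finite A"
  let ?xs = "sort_key f (sorted_list_of_set A)"
  have d: "distinct ?xs" by (simp add: distinct_sort)
  have l: "length ?xs = card A" using \<open>finite A\<close> by simp
  show ?thesis unfolding lowset_def
    by (subst distinct_card) (use d l in \<open>auto intro: distinct_take\<close>)
qed

lemma lowset_order:
  assumes "finite A" "j \<in> lowset f A q" "i \<in> A - lowset f A q"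
  shows "f j \<le> f i"
proof -
  let ?xs = "sort_key f (sorted_list_of_set A)"
  have s: "sorted (map f ?xs)" by (rule sorted_sort_key)
  have d: "distinct ?xs" by (simp add: distinct_sort)
  have sa: "set ?xs = A" using assms(1) by simp
  have "?xs = take q ?xs @ drop q ?xs" by simp
  then have s2: "sorted (map f (take q ?xs) @ map f (drop q ?xs))"
    using s by (metis map_append)
  have jt: "j \<in> set (take q ?xs)" using assms(2) unfolding lowset_def .
  have id: "i \<in> set (drop q ?xs)"
  proof -
    have "i \<in> set ?xs" using assms(3) sa by auto
    moreover have "i \<notin> set (take q ?xs)" using assms(3) unfolding lowset_def by auto
    ultimately show ?thesis by (metis Un_iff append_take_drop_id set_append)
  qed
  show ?thesis using s2 jt id by (auto simp: sorted_append)
qed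

lemma insort_key_cong:
  assumes "\<And>y. y \<in> set xs \<Longrightarrow> (f x \<le> f y) = (g x \<le> g y)"
  shows "insort_key f x xs = insort_key g x xs"
  using assms by (induction xs) auto

lemma sort_key_cong:
  assumes "\<And>x y. x \<in> set xs \<Longrightarrow> y \<in> set xs \<Longrightarrow> (f x \<le> f y) = (g x \<le> g y)"
  shows "sort_key f xs = sort_key g xs"
  using assms
proof (induction xs)
  case Nil then show ?case by simp
next
  case (Cons a xs)
  have ih: "sort_key f xs = sort_key g xs" using Cons by auto
  show ?case using Cons.prems by (simp add: ih, intro insort_key_cong) auto
qed

lemma lowset_cong:
  assumes "finite A" "\<And>i j. i \<in> A \<Longrightarrow> j \<in> A \<Longrightarrow> (f i < f j) = (g i < g j)"
  shows "lowset f A q = lowset g A q"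
proof -
  have "sort_key f (sorted_list_of_set A) = sort_key g (sorted_list_of_set A)"
  proof (rule sort_key_cong)
    fix x y assume "x \<in> set (sorted_list_of_set A)" "y \<in> set (sorted_list_of_set A)"
    then have "x \<in> A" "y \<in> A" using assms(1) by auto
    then have a: "(f x < f y) = (g x < g y)" "(f y < f x) = (g y < g x)" using assms(2) by auto
    then show "(f x \<le> f y) = (g x \<le> g y)"
      using a by (auto simp: not_less[symmetric])
  qed
  then show ?thesis unfolding lowset_def by simp
qed

lemma card_diff_filter_ge:
  assumes "finite A" "R \<subseteq> A" "card R \<le> q"
  shows "card {j \<in> A - R. P j} \<ge> card {j \<in> A. P j} - q"
proof -
  have "{j \<in> A. P j} \<subseteq> {j \<in> A - R. P j} \<union> R" by auto
  then have "card {j \<in> A. P j} \<le> card ({j \<in> A - R. P j} \<union> R)"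
    using assms by (intro card_mono) (auto intro: finite_subset)
  also have "\<dots> \<le> card {j \<in> A - R. P j} + card R" by (rule card_Un_le)
  finally show ?thesis using assms(3) by linarith
qed

lemma top_subset:
  assumes fin: "finite A" and B: "B \<le> card A" and hi: "card {j\<in>A. v j \<ge> L} \<ge> B"
    and j: "j \<in> lowset (\<lambda>j. - v j) A B"
  shows "v j \<ge> L"
proof (rule ccontr)
  assume "\<not> v j \<ge> L"
  then have jl: "v j < L" by simp
  let ?G = "lowset (\<lambda>j. - v j) A B"
  have finG: "finite ?G" using fin by (auto intro: finite_subset[OF lowset_subset])
  have "{i\<in>A. v i \<ge> L} \<subseteq> ?G - {j}"
  proof
    fix i assume i: "i \<in> {i\<in>A. v i \<ge> L}"
    show "i \<in> ?G - {j}"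
    proof (rule ccontr)
      assume "i \<notin> ?G - {j}"
      then have "i \<in> A - ?G" using i jl by auto
      then have "- v j \<le> - v i" using lowset_order[OF fin j] by auto
      then have "v i \<le> v j" by auto
      then show False using i jl by auto
    qed
  qed
  then have "card {i\<in>A. v i \<ge> L} \<le> card (?G - {j})"
    using fin by (intro card_mono) (auto intro: finite_subset[OF lowset_subset])
  also have "\<dots> = B - 1" using j card_lowset[OF fin] B by (simp add: card_Diff_singleton_if)
  finally show False using hi j card_lowset[OF fin, of "\<lambda>j. - v j" B] B finG
    by (cases B) (auto simp: card_eq_0_iff)
qed

lemma step_bottom:
  fixes A :: "nat set" and Y v :: "nat \<Rightarrow> real"
  assumes fin: "finite A" and q: "q + B + t \<le> card A + 1" and B: "B \<le> card A"
    and hi: "card {j\<in>A. v j \<ge> L} \<ge> B"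
    and e1: "card {j\<in>A. Y j > v j + \<epsilon>} < t"
    and e2: "card {j \<in> lowset (\<lambda>j. - v j) A B. Y j < v j - \<epsilon>} \<le> \<beta>"
    and eps: "\<epsilon> \<ge> 0"
  shows "card {j \<in> A - lowset Y A q. v j \<ge> L - 2*\<epsilon>} \<ge> B - \<beta>"
proof -
  let ?G = "lowset (\<lambda>j. - v j) A B"
  let ?R = "lowset Y A q"
  let ?Ga = "{j\<in>?G. Y j \<ge> v j - \<epsilon>}"
  have finG: "finite ?G" using fin by (auto intro: finite_subset[OF lowset_subset])
  have cG: "card ?G = B" using card_lowset[OF fin] B by simp
  have eqG: "?G = ?Ga \<union> {j \<in> ?G. Y j < v j - \<epsilon>}" by auto
  have "card ?G \<le> card ?Ga + card {j \<in> ?G. Y j < v j - \<epsilon>}"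
    by (subst eqG) (rule card_Un_le)
  then have "B \<le> card ?Ga + card {j \<in> ?G. Y j < v j - \<epsilon>}" using cG by simp
  then have cGa: "card ?Ga \<ge> B - \<beta>" using e2 by linarith
  have GL: "\<And>j. j \<in> ?G \<Longrightarrow> v j \<ge> L" using top_subset[OF fin B hi] by auto
  show ?thesis
  proof (cases "?Ga \<subseteq> A - ?R")
    case True
    have "?Ga \<subseteq> {j \<in> A - ?R. v j \<ge> L - 2*\<epsilon>}"
    proof
      fix j assume j: "j \<in> ?Ga"
      then have "v j \<ge> L" using GL by auto
      then show "j \<in> {j \<in> A - ?R. v j \<ge> L - 2*\<epsilon>}" using True j eps by auto
    qed
    then have "card ?Ga \<le> card {j \<in> A - ?R. v j \<ge> L - 2*\<epsilon>}"
      using fin by (intro card_mono) auto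
    then show ?thesis using cGa by linarith
  next
    case False
    then obtain a where a: "a \<in> ?Ga" "a \<in> ?R" using lowset_subset[OF fin, of "\<lambda>j. - v j" B] by auto
    have t1: "t \<ge> 1" using e1 by simp
    have qA: "q \<le> card A" using q t1 by linarith
    have ya: "Y a \<ge> L - \<epsilon>" using a GL by force
    have sub: "{j \<in> A - ?R. \<not> v j \<ge> L - 2*\<epsilon>} \<subseteq> {j\<in>A. Y j > v j + \<epsilon>}"
    proof
      fix j assume j: "j \<in> {j \<in> A - ?R. \<not> v j \<ge> L - 2*\<epsilon>}"
      then have "Y a \<le> Y j" using lowset_order[OF fin a(2)] by auto
      then show "j \<in> {j\<in>A. Y j > v j + \<epsilon>}" using j ya by auto
    qed
    have "card {j \<in> A - ?R. \<not> v j \<ge> L - 2*\<epsilon>} \<le> card {j\<in>A. Y j > v j + \<epsilon>}"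
      using fin by (intro card_mono[OF _ sub]) auto
    then have c1: "card {j \<in> A - ?R. \<not> v j \<ge> L - 2*\<epsilon>} \<le> t - 1"
      using e1 by linarith
    have cR: "card (A - ?R) = card A - q"
    proof -
      have "card (A - ?R) = card A - card ?R"
        using lowset_subset[OF fin] fin by (intro card_Diff_subset) (auto intro: finite_subset)
      then show ?thesis using card_lowset[OF fin, of Y q] qA by simp
    qed
    have eqR: "A - ?R = {j \<in> A - ?R. v j \<ge> L - 2*\<epsilon>} \<union> {j \<in> A - ?R. \<not> v j \<ge> L - 2*\<epsilon>}" by auto
    have "card (A - ?R) \<le> card {j \<in> A - ?R. v j \<ge> L - 2*\<epsilon>} + card {j \<in> A - ?R. \<not> v j \<ge> L - 2*\<epsilon>}"
      by (subst eqR) (rule card_Un_le)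
    then show ?thesis using c1 cR q t1 qA by arith
  qed
qed


definition tof :: "nat \<Rightarrow> nat" where "tof n = (n + 7) div 8"

definition qof :: "nat \<times> nat \<times> nat \<times> nat \<Rightarrow> nat" where
  "qof x = (case x of (n,B,C,S) \<Rightarrow> if n \<le> 1 then 0 else if B \<le> C then min (n + 1 - B - tof n) (n div 2)
      else min (n + 1 - C - tof n) (n div 2))"

definition stp :: "nat \<times> nat \<times> nat \<times> nat \<Rightarrow> nat \<times> nat \<times> nat \<times> nat" where
  "stp x = (case x of (n,B,C,S) \<Rightarrow> if n \<le> 1 then x else if B \<le> C
     then (n - qof x, B - (S - S div 2), C - qof x, S div 2)
     else (n - qof x, B - qof x, C - (S - S div 2), S div 2))"

definition sinv :: "nat \<Rightarrow> nat \<times> nat \<times> nat \<times> nat \<Rightarrow> bool" where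
  "sinv K x = (case x of (n,B,C,S) \<Rightarrow> 1 \<le> n \<and> 1 \<le> B \<and> B \<le> n \<and> 1 \<le> C \<and> C \<le> n \<and> B + C = n + 1 + S
     \<and> 8 * S \<le> n \<and> B \<le> K)"

lemma tof_bounds: "n \<ge> 1 \<Longrightarrow> tof n \<ge> 1 \<and> 8 * tof n \<le> n + 7 \<and> 8 * tof n \<ge> n"
  unfolding tof_def by auto

lemma qof_bot:
  assumes "sinv K (n,B,C,S)" "n \<ge> 2" "B \<le> C"
  shows "qof (n,B,C,S) + B + tof n \<le> n + 1" "8 * qof (n,B,C,S) \<ge> n" "2 * qof (n,B,C,S) \<le> n"
proof -
  have t: "tof n \<ge> 1" "8 * tof n \<le> n + 7" using tof_bounds assms(2) by auto
  have i: "B + C = n + 1 + S" "8 * S \<le> n" "C \<le> n" using assms(1) unfolding sinv_def by auto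
  have q: "qof (n,B,C,S) = min (n + 1 - B - tof n) (n div 2)" using assms(2,3) unfolding qof_def by auto
  show "qof (n,B,C,S) + B + tof n \<le> n + 1" using q t i assms by linarith
  show "8 * qof (n,B,C,S) \<ge> n" using q t i assms by linarith
  show "2 * qof (n,B,C,S) \<le> n" using q by linarith
qed

lemma qof_top:
  assumes "sinv K (n,B,C,S)" "n \<ge> 2" "\<not> B \<le> C"
  shows "qof (n,B,C,S) + C + tof n \<le> n + 1" "8 * qof (n,B,C,S) \<ge> n" "2 * qof (n,B,C,S) \<le> n"
proof -
  have t: "tof n \<ge> 1" "8 * tof n \<le> n + 7" using tof_bounds assms(2) by auto
  have i: "B + C = n + 1 + S" "8 * S \<le> n" "B \<le> n" using assms(1) unfolding sinv_def by auto
  have q: "qof (n,B,C,S) = min (n + 1 - C - tof n) (n div 2)" using assms(2,3) unfolding qof_def by auto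
  show "qof (n,B,C,S) + C + tof n \<le> n + 1" using q t i assms by linarith
  show "8 * qof (n,B,C,S) \<ge> n" using q t i assms by linarith
  show "2 * qof (n,B,C,S) \<le> n" using q by linarith
qed

lemma stp_inv: assumes "sinv K x" shows "sinv K (stp x)"
proof -
  obtain n B C S where x: "x = (n,B,C,S)" by (cases x) auto
  show ?thesis
  proof (cases "n \<le> 1")
    case True then show ?thesis using assms x unfolding stp_def by simp
  next
    case False
    then have n2: "n \<ge> 2" by simp
    have i: "1 \<le> n" "1 \<le> B" "B \<le> n" "1 \<le> C" "C \<le> n" "B + C = n + 1 + S" "8 * S \<le> n" "B \<le> K"
      using assms x unfolding sinv_def by auto
    have t: "tof n \<ge> 1" using tof_bounds n2 by auto
    show ?thesis
    proof (cases "B \<le> C")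
      case True
      note qb = qof_bot[OF assms[unfolded x] n2 True]
      show ?thesis using False True i qb t unfolding x stp_def sinv_def
        by (simp add: Let_def) linarith
    next
      case nb: False
      note qb = qof_top[OF assms[unfolded x] n2 nb]
      show ?thesis using False nb i qb t unfolding x stp_def sinv_def
        by (simp add: Let_def) linarith
    qed
  qed
qed

lemma stp_progress:
  assumes "sinv K x" "fst x \<ge> 2"
  shows "8 * fst (stp x) \<le> 7 * fst x" "2 * fst (stp x) \<ge> fst x"
proof -
  obtain n B C S where x: "x = (n,B,C,S)" by (cases x) auto
  have n2: "n \<ge> 2" using assms x by simp
  have "8 * fst (stp x) \<le> 7 * fst x \<and> 2 * fst (stp x) \<ge> fst x"
  proof (cases "B \<le> C")
    case True
    note qb = qof_bot[OF assms(1)[unfolded x] n2 True]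
    show ?thesis using qb n2 True unfolding x stp_def by simp linarith
  next
    case nb: False
    note qb = qof_top[OF assms(1)[unfolded x] n2 nb]
    show ?thesis using qb n2 nb unfolding x stp_def by simp linarith
  qed
  then show "8 * fst (stp x) \<le> 7 * fst x" "2 * fst (stp x) \<ge> fst x" by auto
qed

lemma stp_S: "fst x \<ge> 2 \<Longrightarrow> snd (snd (snd (stp x))) = snd (snd (snd x)) div 2"
  unfolding stp_def by (cases x) auto

lemma stp_idle: "fst x \<le> 1 \<Longrightarrow> stp x = x"
  unfolding stp_def by (cases x) auto


locale prm = fixes S :: "nat set" and K :: nat and \<tau> \<phi> \<delta> :: real
begin

definition "n = card S"
definition "Kp = nat \<lceil>(1 - \<tau>) * real K\<rceil>"
definition "S0 = min (K - Kp) (n div 8)"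
definition "init = (n, Kp + S0, n - Kp + 1, S0)"
definition "sch r = (stp ^^ r) init"
definition "nn r = fst (sch r)"
definition "Bv r = fst (snd (sch r))"
definition "Cv r = fst (snd (snd (sch r)))"
definition "Sv r = snd (snd (snd (sch r)))"
definition "act r = (nn r \<ge> 2)"
definition "isbot r = (Bv r \<le> Cv r)"
definition "q r = qof (sch r)"
definition "beta r = Sv r - Sv r div 2"
definition "bb r = (if isbot r then Bv r else Cv r)"
definition "eps r = \<phi> / 40 * (19/20) ^ r"
definition "pr r = \<tau> * \<delta> / 2 ^ (2 * r + 8)"
definition "m r = (if act r then nat \<lceil>ln (1 / pr r) / (2 * eps r ^ 2)\<rceil> else 0)"
definition "N r = (\<Sum>s<r. m s)"
definition "est T j r = (\<Sum>c\<in>{N r..<N r + m r}. T (j, c)) / real (m r)"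
definition "sg r = (if isbot r then 1 else - 1 :: real)"
definition "key T r = (\<lambda>j. sg r * est T j r)"

primrec surv :: "(nat \<times> nat \<Rightarrow> real) \<Rightarrow> nat \<Rightarrow> nat set" where
  "surv T 0 = S"
| "surv T (Suc r) = surv T r - lowset (key T r) (surv T r) (q r)"

definition "blk T r = concat (map (\<lambda>a. map (\<lambda>i. (a, N r + i)) [0..<m r]) (sorted_list_of_set (surv T r)))"
definition "fs T k = concat (map (blk T) [0..<k])"
definition "out T = Min (surv T n)"
definition "recon h = (\<lambda>p. let l = filter (\<lambda>x. fst x = fst p) h in if snd p < length l then snd (l ! snd p) else 0)"
definition "pol h = (let T = recon h; sq = fs T n in
   if length h < length sq then Pull (fst (sq ! length h)) else Output (out T))"

end

locale vprm = prm +
  assumes finS: "finite S" and neS: "S \<noteq> {}" and K1: "1 \<le> K" and Kn: "K \<le> card S"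
    and tau: "0 < \<tau>" "\<tau> \<le> 1/2" and tauK: "(1 - \<tau>) * K \<ge> 1"
    and phi: "0 < \<phi>" "\<phi> \<le> 1" and delta: "0 < \<delta>" "\<delta> \<le> 1/2"
begin

lemma n1: "n \<ge> 1" using finS neS unfolding n_def by (simp add: Suc_leI card_gt_0_iff)

lemma Kp_bounds: "Kp \<ge> 1" "Kp \<le> K" "real (K - Kp) + 1 \<ge> \<tau> * K"
proof -
  have a: "(1 - \<tau>) * real K \<ge> 1" using tauK by simp
  have b: "(1 - \<tau>) * real K \<le> real K" using tau by (simp add: mult_le_cancel_right2)
  have c: "real_of_int \<lceil>(1 - \<tau>) * real K\<rceil> < (1 - \<tau>) * real K + 1" by linarith
  have d: "\<lceil>(1 - \<tau>) * real K\<rceil> \<le> int K" using b by (simp add: ceiling_le_iff)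
  have e: "\<lceil>(1 - \<tau>) * real K\<rceil> \<ge> 1" using a by (simp add: one_le_ceiling)
  show "Kp \<ge> 1" using e unfolding Kp_def by linarith
  show "Kp \<le> K" using d unfolding Kp_def by linarith
  have "real Kp = real_of_int \<lceil>(1 - \<tau>) * real K\<rceil>" using e unfolding Kp_def by simp
  then show "real (K - Kp) + 1 \<ge> \<tau> * K" using c d e \<open>Kp \<le> K\<close> by (simp add: of_nat_diff algebra_simps)
qed

lemma div2_real: "real (x div 2) \<ge> (real x - 1) / 2" "real (x - x div 2) \<ge> real x / 2"
proof -
  have "2 * (x div 2) + 1 \<ge> x" by arith
  then have "real x \<le> real (2 * (x div 2) + 1)" by (simp only: of_nat_le_iff)
  then show "real (x div 2) \<ge> (real x - 1) / 2" by simp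
  have "2 * (x - x div 2) \<ge> x" by arith
  then have "real x \<le> real (2 * (x - x div 2))" by (simp only: of_nat_le_iff)
  then show "real (x - x div 2) \<ge> real x / 2" by simp
qed

lemma sinv_init: "sinv K init"
  using Kp_bounds n1 Kn unfolding init_def sinv_def S0_def n_def by auto

lemma sinv_sch: "sinv K (sch r)"
  by (induction r) (auto simp: sch_def sinv_init intro: stp_inv)

lemma sch_Suc: "sch (Suc r) = stp (sch r)" by (simp add: sch_def)

lemma sch_tuple: "sch r = (nn r, Bv r, Cv r, Sv r)" by (simp add: nn_def Bv_def Cv_def Sv_def)

lemma nn_pos: "nn r \<ge> 1" "Bv r \<ge> 1" "Bv r \<le> nn r" "Cv r \<ge> 1" "Cv r \<le> nn r"
  "Bv r + Cv r = nn r + 1 + Sv r" "8 * Sv r \<le> nn r" "Bv r \<le> K"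
  using sinv_sch[of r] unfolding sch_tuple sinv_def by auto

lemma nn0: "nn 0 = n" by (simp add: nn_def sch_def init_def)

lemma nn_Suc_act: "act r \<Longrightarrow> 8 * nn (Suc r) \<le> 7 * nn r \<and> 2 * nn (Suc r) \<ge> nn r"
  using stp_progress[OF sinv_sch[of r]] unfolding act_def nn_def sch_Suc by auto

lemma sch_Suc_idle: "\<not> act r \<Longrightarrow> sch (Suc r) = sch r"
  using stp_idle[of "sch r"] unfolding act_def nn_def sch_Suc by auto

lemma nn_mono_Suc: "nn (Suc r) \<le> nn r"
  using nn_Suc_act[of r] sch_Suc_idle[of r] unfolding nn_def by (cases "act r") auto

lemma nn_antimono: "r \<le> s \<Longrightarrow> nn s \<le> nn r"
  by (induction s rule: dec_induct) (auto intro: le_trans[OF nn_mono_Suc])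

lemma act_prev: "act r \<Longrightarrow> s \<le> r \<Longrightarrow> act s"
  using nn_antimono[of s r] unfolding act_def by auto

lemma nn_bound: "nn r \<le> max 1 (n - r)"
proof (induction r)
  case 0 then show ?case using nn0 by simp
next
  case (Suc r)
  show ?case
  proof (cases "act r")
    case True
    then have "nn (Suc r) < nn r" using nn_Suc_act[of r] unfolding act_def by linarith
    then show ?thesis using Suc True unfolding act_def by linarith
  next
    case False then show ?thesis using nn_mono_Suc[of r] unfolding act_def by linarith
  qed
qed

lemma nn_final: "nn n = 1"
  using nn_bound[of n] nn_pos(1)[of n] by simp

lemma nn_geom: "act r \<Longrightarrow> real (nn r) \<le> real n * (7/8) ^ r"
proof (induction r)
  case 0 then show ?case using nn0 by simp
next
  case (Suc r)
  have ar: "act r" using act_prev[OF Suc.prems, of r] by simp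
  have "8 * nn (Suc r) \<le> 7 * nn r" using nn_Suc_act[OF ar] by simp
  then have "real (nn (Suc r)) \<le> 7/8 * real (nn r)" by linarith
  also have "\<dots> \<le> 7/8 * (real n * (7/8) ^ r)" using Suc.IH[OF ar] by simp
  finally show ?case by (simp add: field_simps)
qed

lemma nn_ge_half: "act r \<Longrightarrow> real (nn r) * 2 ^ r \<ge> real n"
proof (induction r)
  case 0 then show ?case using nn0 by simp
next
  case (Suc r)
  have ar: "act r" using act_prev[OF Suc.prems, of r] by simp
  have "2 * nn (Suc r) \<ge> nn r" using nn_Suc_act[OF ar] by simp
  then have "real (nn (Suc r)) * 2 ^ Suc r \<ge> real (nn r) * 2 ^ r" by (simp add: field_simps)
  then show ?case using Suc.IH[OF ar] by linarith
qed

lemma Sv_Suc: "act r \<Longrightarrow> Sv (Suc r) = Sv r div 2"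
  using stp_S[of "sch r"] unfolding act_def nn_def Sv_def sch_Suc by auto

lemma Sv_lower: "real (Sv r) + 1 \<ge> (real S0 + 1) / 2 ^ r"
proof (induction r)
  case 0 then show ?case by (simp add: Sv_def sch_def init_def)
next
  case (Suc r)
  show ?case
  proof (cases "act r")
    case True
    have "real (Sv (Suc r)) + 1 \<ge> (real (Sv r) + 1) / 2" using Sv_Suc[OF True] div2_real(1)[of "Sv r"] by simp
    moreover have "(real (Sv r) + 1) / 2 \<ge> (real S0 + 1) / 2 ^ Suc r" using Suc by (simp add: field_simps)
    ultimately show ?thesis by linarith
  next
    case False
    then have "Sv (Suc r) = Sv r" using sch_Suc_idle unfolding Sv_def by simp
    moreover have "(real S0 + 1) / 2 ^ Suc r \<le> (real S0 + 1) / 2 ^ r" by (simp add: field_simps)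
    ultimately show ?thesis using Suc by linarith
  qed
qed

lemma bb_le: "bb r \<le> K" "bb r \<le> nn r"
  using nn_pos[of r] unfolding bb_def isbot_def by auto

lemma beta_bound: "real (bb r) \<le> 2 ^ (r + 4) / \<tau> * (real (beta r) + 1)"
proof -
  have b1: "real (beta r) + 1 \<ge> (real S0 + 1) / 2 ^ (r + 1)"
  proof -
    have "real (beta r) + 1 \<ge> (real (Sv r) + 1) / 2" unfolding beta_def using div2_real(2)[of "Sv r"] by (simp add: add_divide_distrib)
    moreover have "(real S0 + 1) / 2^(r+1) = ((real S0 + 1)/2^r)/2" by simp
    moreover have "((real S0 + 1)/2^r)/2 \<le> (real (Sv r) + 1) / 2"
      using Sv_lower[of r] by (intro divide_right_mono) auto
    ultimately show ?thesis by linarith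
  qed
  have pos: "(0::real) < 2 ^ (r + 1)" by simp
  have b2: "real S0 + 1 \<le> 2^(r+1) * (real (beta r) + 1)"
    using b1 pos by (simp add: divide_le_eq mult.commute)
  have t: "0 < \<tau>" "\<tau> \<le> 1" using tau by auto
  show ?thesis
  proof (cases "S0 = K - Kp")
    case True
    have "real (bb r) \<le> real K" using bb_le by simp
    also have "\<dots> \<le> (real S0 + 1) / \<tau>" using Kp_bounds(3) True t by (simp add: field_simps)
    also have "\<dots> \<le> 2 ^ (r+1) * (real (beta r) + 1) / \<tau>"
      using b2 t by (intro divide_right_mono) auto
    also have "\<dots> \<le> 2 ^ (r + 4) * (real (beta r) + 1) / \<tau>"
    proof -
      have "(2::real)^(r+1) \<le> 2^(r+4)" by (rule power_increasing) auto
      then have "(2::real)^(r+1) * (real (beta r) + 1) \<le> 2^(r+4) * (real (beta r) + 1)"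
        by (rule mult_right_mono) auto
      then show ?thesis using t by (intro divide_right_mono) auto
    qed
    also have "\<dots> = 2 ^ (r + 4) / \<tau> * (real (beta r) + 1)" by simp
    finally show ?thesis .
  next
    case False
    then have s0: "S0 = n div 8" unfolding S0_def by auto
    have "real (bb r) \<le> real n" using bb_le(2)[of r] nn_antimono[of 0 r] nn0 by simp
    also have "\<dots> \<le> 8 * (real S0 + 1)"
    proof -
      have "n \<le> 8 * (n div 8 + 1)" by arith
      then have "real n \<le> real (8 * (S0 + 1))" using s0 by (simp only: of_nat_le_iff)
      then show ?thesis by simp
    qed
    also have "\<dots> \<le> 8 * (2 ^ (r+1) * (real (beta r) + 1))"
      using b2 by simp
    also have "\<dots> \<le> 2 ^ (r + 4) / \<tau> * (real (beta r) + 1)"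
    proof -
      have "8 * (2 ^ (r+1)) = (2::real) ^ (r + 4)" by (simp add: power_add)
      moreover have "(2::real) ^ (r+4) \<le> 2 ^ (r+4) / \<tau>" using t by (simp add: field_simps)
      moreover have "real (beta r) + 1 \<ge> 0" by simp
      ultimately show ?thesis by (metis mult.assoc mult_right_mono)
    qed
    finally show ?thesis .
  qed
qed

end


lemma lowset_cong_eq: "finite A \<Longrightarrow> (\<And>j. j \<in> A \<Longrightarrow> f j = g j) \<Longrightarrow> lowset f A q = lowset g A q"
  by (rule lowset_cong) auto

lemma filter_blk_gen:
  assumes "distinct ls"
  shows "filter (\<lambda>p. fst p = j) (concat (map (\<lambda>a. map (\<lambda>i. (a, g i)) xs) ls)) =
    (if j \<in> set ls then map (\<lambda>i. (j, g i)) xs else [])"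
  using assms by (induction ls) (auto simp: filter_empty_conv)

lemma col_prefix:
  assumes "map snd (filter (\<lambda>p. fst p = j) xs) = [0..<length (filter (\<lambda>p. fst p = j) xs)]"
  shows "map snd (filter (\<lambda>p. fst p = j) (take k xs)) = [0..<length (filter (\<lambda>p. fst p = j) (take k xs))]"
proof -
  let ?a = "filter (\<lambda>p. fst p = j) (take k xs)"
  let ?b = "filter (\<lambda>p. fst p = j) (drop k xs)"
  have f: "filter (\<lambda>p. fst p = j) xs = ?a @ ?b" by (metis append_take_drop_id filter_append)
  have "map snd ?a @ map snd ?b = [0..<length ?a + length ?b]"
    using assms unfolding f map_append length_append .
  also have "\<dots> = [0..<length ?a] @ [length ?a..<length ?a + length ?b]" by (rule upt_add_eq_append) simp
  finally have "map snd ?a @ map snd ?b = [0..<length ?a] @ [length ?a..<length ?a + length ?b]" .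
  then show ?thesis using append_eq_append_conv[of "map snd ?a" "[0..<length ?a]"] by (simp only: length_map length_upt) simp
qed

lemma col_nth:
  assumes col: "\<And>j. map snd (filter (\<lambda>p. fst p = j) xs) = [0..<length (filter (\<lambda>p. fst p = j) xs)]"
    and k: "k < length xs"
  shows "snd (xs ! k) = length (filter (\<lambda>p. fst p = fst (xs ! k)) (take k xs))"
proof -
  let ?j = "fst (xs ! k)"
  have "map snd (filter (\<lambda>p. fst p = ?j) (take (Suc k) xs)) = [0..<length (filter (\<lambda>p. fst p = ?j) (take (Suc k) xs))]"
    by (rule col_prefix[OF col])
  moreover have "take (Suc k) xs = take k xs @ [xs ! k]" using k by (simp add: take_Suc_conv_app_nth)
  ultimately show ?thesis by simp
qed

lemma list_pairs:
  assumes cF: "map snd F = [0..<length F]" and fF: "\<forall>x\<in>set F. fst x = a"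
  shows "F = map (Pair a) [0..<length F]"
proof (rule nth_equalityI)
  show "length F = length (map (Pair a) [0..<length F])" by simp
  fix i assume i: "i < length F"
  have "snd (F ! i) = i" using cF i by (metis length_map nth_map nth_upt add_0)
  moreover have "fst (F ! i) = a" using fF i nth_mem by blast
  ultimately show "F ! i = map (Pair a) [0..<length F] ! i" using i by (cases "F ! i") auto
qed

lemma recon_agree_gen:
  assumes col: "\<And>j. map snd (filter (\<lambda>p. fst p = j) xs) = [0..<length (filter (\<lambda>p. fst p = j) xs)]"
    and p: "p \<in> set (take k xs)"
  shows "prm.recon (map (\<lambda>p. (fst p, T p)) (take k xs)) p = T p"
proof -
  obtain a c where pc: "p = (a, c)" by (cases p) auto
  define F where "F = filter (\<lambda>x. fst x = a) (take k xs)"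
  have cF: "map snd F = [0..<length F]" unfolding F_def by (rule col_prefix[OF col])
  have fF: "\<forall>x\<in>set F. fst x = a" unfolding F_def by auto
  have F: "F = map (Pair a) [0..<length F]" by (rule list_pairs[OF cF fF])
  have "(a, c) \<in> set F" using p pc unfolding F_def by auto
  then have "(a, c) \<in> set (map (Pair a) [0..<length F])" using F by metis
  then have cl: "c < length F" by auto
  have fm: "filter (\<lambda>x. fst x = a) (map (\<lambda>p. (fst p, T p)) (take k xs)) = map (\<lambda>p. (fst p, T p)) F"
    unfolding F_def by (simp add: filter_map comp_def)
  have "F ! c = (a, c)" using cl F by (metis nth_map nth_upt add_0 length_map)
  moreover have "prm.recon (map (\<lambda>p. (fst p, T p)) (take k xs)) (a, c) =
     (if c < length (map (\<lambda>p. (fst p, T p)) F) then snd ((map (\<lambda>p. (fst p, T p)) F) ! c) else 0)"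
    unfolding prm.recon_def Let_def fst_conv snd_conv fm ..
  ultimately show ?thesis using cl unfolding pc by simp
qed

context vprm begin

lemma q_le: "q r \<le> nn r" "nn (Suc r) = nn r - q r"
proof -
  have "q r \<le> nn r \<and> nn (Suc r) = nn r - q r"
  proof (cases "act r")
    case True
    have "2 * q r \<le> nn r"
      using qof_bot[of K "nn r" "Bv r" "Cv r" "Sv r"] qof_top[of K "nn r" "Bv r" "Cv r" "Sv r"]
        sinv_sch[of r] True unfolding act_def q_def sch_tuple by (cases "Bv r \<le> Cv r") auto
    moreover have "nn (Suc r) = nn r - q r"
      using True unfolding nn_def sch_Suc q_def act_def stp_def
      by (cases "sch r") (auto simp: Let_def)
    ultimately show ?thesis by simp
  next
    case False
    then show ?thesis using sch_Suc_idle[OF False] unfolding q_def act_def nn_def qof_def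
      by (cases "sch r") auto
  qed
  then show "q r \<le> nn r" "nn (Suc r) = nn r - q r" by auto
qed

lemma surv_props: "surv T r \<subseteq> S \<and> finite (surv T r) \<and> card (surv T r) = nn r"
proof (induction r)
  case 0 then show ?case using finS nn0 n_def by simp
next
  case (Suc r)
  have fin: "finite (surv T r)" using Suc by simp
  have sub: "lowset (key T r) (surv T r) (q r) \<subseteq> surv T r" by (rule lowset_subset[OF fin])
  have "card (surv T (Suc r)) = card (surv T r) - card (lowset (key T r) (surv T r) (q r))"
    using sub fin by (simp add: card_Diff_subset finite_subset)
  also have "\<dots> = nn (Suc r)" using card_lowset[OF fin] Suc q_le[of r] by simp
  finally show ?case using Suc by auto
qed

lemma surv_sub: "surv T r \<subseteq> S" and surv_fin: "finite (surv T r)" and surv_card: "card (surv T r) = nn r"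
  using surv_props by auto

lemma surv_mono: "r \<le> s \<Longrightarrow> surv T s \<subseteq> surv T r"
  by (induction s rule: dec_induct) auto

lemma est_cong: "(\<And>c. c \<in> {N r..<N r + m r} \<Longrightarrow> T' (j, c) = T (j, c)) \<Longrightarrow> est T' j r = est T j r"
  unfolding est_def by simp

lemma surv_cong:
  assumes "\<And>s j c. s < r \<Longrightarrow> j \<in> surv T s \<Longrightarrow> c \<in> {N s..<N s + m s} \<Longrightarrow> T' (j, c) = T (j, c)"
  shows "surv T' r = surv T r"
  using assms
proof (induction r)
  case 0 then show ?case by simp
next
  case (Suc r)
  have ih: "surv T' r = surv T r"
  proof (rule Suc.IH)
    fix s j c assume "s < r" "j \<in> surv T s" "c \<in> {N s..<N s + m s}"
    then show "T' (j, c) = T (j, c)" by (intro Suc.prems) auto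
  qed
  have "lowset (key T' r) (surv T r) (q r) = lowset (key T r) (surv T r) (q r)"
  proof (rule lowset_cong_eq[OF surv_fin])
    fix j assume "j \<in> surv T r"
    then have "est T' j r = est T j r" by (intro est_cong Suc.prems) auto
    then show "key T' r j = key T r j" unfolding key_def by simp
  qed
  moreover have "surv T' (Suc r) = surv T' r - lowset (key T' r) (surv T' r) (q r)" by simp
  ultimately show ?case using ih by simp
qed

lemma set_blk: "set (blk T r) = {(a, N r + i) | a i. a \<in> surv T r \<and> i < m r}"
  unfolding blk_def using surv_fin by auto

lemma length_blk: "length (blk T r) = nn r * m r"
proof -
  have "length (blk T r) = sum_list (map (\<lambda>a. m r) (sorted_list_of_set (surv T r)))"
    unfolding blk_def by (simp add: length_concat comp_def)
  also have "\<dots> = card (surv T r) * m r" using surv_fin by (simp add: sum_list_triv)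
  finally show ?thesis using surv_card by simp
qed

lemma fs_Suc: "fs T (Suc k) = fs T k @ blk T k" unfolding fs_def by simp

lemma length_fs: "length (fs T k) = (\<Sum>r<k. nn r * m r)"
  by (induction k) (auto simp: fs_Suc length_blk, simp add: fs_def)

lemma set_fs: "set (fs T k) = (\<Union>r<k. set (blk T r))"
  unfolding fs_def by auto

lemma filter_blk: "filter (\<lambda>p. fst p = j) (blk T r) = (if j \<in> surv T r then map (\<lambda>i. (j, N r + i)) [0..<m r] else [])"
  unfolding blk_def using surv_fin by (subst filter_blk_gen) auto

definition "cnt T j k = (\<Sum>r<k. if j \<in> surv T r then m r else 0)"

lemma cnt_N: "j \<in> surv T k \<Longrightarrow> cnt T j k = N k"
proof -
  assume j: "j \<in> surv T k"
  have "\<And>r. r < k \<Longrightarrow> j \<in> surv T r" using surv_mono j by (meson less_imp_le subsetD)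
  then show ?thesis unfolding cnt_def N_def by simp
qed

lemma filter_fs: "filter (\<lambda>p. fst p = j) (fs T k) = map (Pair j) [0..<cnt T j k]"
proof (induction k)
  case 0 then show ?case by (simp add: fs_def cnt_def)
next
  case (Suc k)
  show ?case
  proof (cases "j \<in> surv T k")
    case True
    have c1: "cnt T j (Suc k) = N k + m k" using cnt_N[OF True] True by (simp add: cnt_def)
    have e1: "[0..<N k + m k] = [0..<N k] @ [N k..<N k + m k]" by (rule upt_add_eq_append) simp
    have ee: "(\<lambda>i. N k + i) = (\<lambda>i. i + N k)" by (rule ext) simp
    have e2: "map (\<lambda>i. N k + i) [0..<m k] = [N k..<N k + m k]"
      unfolding ee map_add_upt by (simp add: add.commute)
    have "filter (\<lambda>p. fst p = j) (fs T (Suc k)) = map (Pair j) [0..<cnt T j k] @ map (\<lambda>i. (j, N k + i)) [0..<m k]"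
      unfolding fs_Suc filter_append Suc.IH filter_blk using True by simp
    also have "\<dots> = map (Pair j) ([0..<N k] @ map (\<lambda>i. N k + i) [0..<m k])"
      using cnt_N[OF True] by simp
    also have "\<dots> = map (Pair j) [0..<cnt T j (Suc k)]" unfolding e2 c1 e1 ..
    finally show ?thesis .
  next
    case False
    have c1: "cnt T j (Suc k) = cnt T j k" using False by (simp add: cnt_def)
    show ?thesis unfolding fs_Suc filter_append Suc.IH filter_blk c1 using False by simp
  qed
qed

lemma col_fs: "map snd (filter (\<lambda>p. fst p = j) (fs T k)) = [0..<length (filter (\<lambda>p. fst p = j) (fs T k))]"
  unfolding filter_fs by (simp add: comp_def)

lemma mem_fs: "sa < k \<Longrightarrow> j \<in> surv T sa \<Longrightarrow> N sa \<le> c \<Longrightarrow> c < N sa + m sa \<Longrightarrow> (j,c) \<in> set (fs T k)"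
  unfolding set_fs set_blk by (auto intro!: bexI[of _ sa] exI[of _ "c - N sa"])

lemma surv_cong_fs:
  assumes "\<And>p. p \<in> set (fs T k) \<Longrightarrow> T' p = T p" "s \<le> k"
  shows "surv T' s = surv T s"
proof (rule surv_cong)
  fix sa j c assume "sa < s" "j \<in> surv T sa" "c \<in> {N sa..<N sa + m sa}"
  then show "T' (j, c) = T (j, c)" using assms by (intro assms(1) mem_fs) auto
qed

lemma fs_cong:
  assumes "\<And>p. p \<in> set (fs T k) \<Longrightarrow> T' p = T p"
  shows "fs T' k = fs T k"
proof -
  have "\<And>r. r < k \<Longrightarrow> blk T' r = blk T r"
    using surv_cong_fs[OF assms] unfolding blk_def by auto
  then have "map (blk T') [0..<k] = map (blk T) [0..<k]" by (intro map_cong) auto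
  then show ?thesis unfolding fs_def by (rule arg_cong)
qed

lemma fs_prefix:
  assumes "k < length (fs T R)" "\<And>p. p \<in> set (take k (fs T R)) \<Longrightarrow> T' p = T p"
  shows "fs T' R ! k = fs T R ! k"
  using assms
proof (induction R)
  case 0 then show ?case by (simp add: fs_def)
next
  case (Suc R)
  show ?case
  proof (cases "k < length (fs T R)")
    case True
    have "take k (fs T (Suc R)) = take k (fs T R)" using True by (simp add: fs_Suc)
    then have "fs T' R ! k = fs T R ! k" using Suc True by auto
    moreover have "length (fs T' R) = length (fs T R)" by (simp add: length_fs)
    ultimately show ?thesis using True by (simp add: fs_Suc nth_append)
  next
    case False
    have "set (fs T R) \<subseteq> set (take k (fs T (Suc R)))"
      using False by (simp add: fs_Suc take_append)
    then have ag: "\<And>p. p \<in> set (fs T R) \<Longrightarrow> T' p = T p" using Suc.prems by auto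
    have "fs T' R = fs T R" by (rule fs_cong[OF ag])
    moreover have "surv T' R = surv T R" by (rule surv_cong_fs[OF ag le_refl])
    then have "blk T' R = blk T R" unfolding blk_def by simp
    ultimately show ?thesis by (simp add: fs_Suc)
  qed
qed

definition "hist T k = map (\<lambda>p. (fst p, T p)) (take k (fs T n))"
definition "Ltot = (\<Sum>r<n. nn r * m r)"

lemma length_fsn: "length (fs T n) = Ltot" unfolding Ltot_def length_fs ..

lemma recon_hist: "p \<in> set (take k (fs T n)) \<Longrightarrow> recon (hist T k) p = T p"
  unfolding hist_def using recon_agree_gen[OF col_fs] by blast

lemma pol_hist_pull:
  assumes "k < Ltot"
  shows "pol (hist T k) = Pull (fst (fs T n ! k))"
proof -
  have l: "length (hist T k) = k" using assms length_fsn by (simp add: hist_def)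
  have "fs (recon (hist T k)) n ! k = fs T n ! k"
    using assms length_fsn by (intro fs_prefix) (auto intro: recon_hist)
  then show ?thesis using l assms unfolding pol_def by (simp add: Let_def length_fs Ltot_def)
qed

lemma pol_hist_out: "pol (hist T Ltot) = Output (out T)"
proof -
  have l: "length (hist T Ltot) = Ltot" using length_fsn by (simp add: hist_def)
  have ag: "\<And>p. p \<in> set (fs T n) \<Longrightarrow> recon (hist T Ltot) p = T p"
    using recon_hist[of _ Ltot T] length_fsn by simp
  have "surv (recon (hist T Ltot)) n = surv T n" by (rule surv_cong_fs[OF ag le_refl])
  then show ?thesis using l unfolding pol_def out_def by (simp add: Let_def length_fs Ltot_def)
qed

lemma run_hist: "k \<le> Ltot \<Longrightarrow> run pol T (Ltot - k + 1 + e) (hist T k) = Some (out T, hist T Ltot)"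
proof (induction "Ltot - k" arbitrary: k)
  case 0
  then have "k = Ltot" by simp
  then show ?case using pol_hist_out by simp
next
  case (Suc d)
  then have k: "k < Ltot" by simp
  let ?x = "fs T n ! k"
  have pl: "pulls (fst ?x) (hist T k) = snd ?x"
    using col_nth[OF col_fs, of k T n] k length_fsn
    unfolding pulls_def hist_def by (simp add: filter_map comp_def)
  have hs: "hist T (Suc k) = hist T k @ [(fst ?x, T (fst ?x, snd ?x))]"
    using k length_fsn unfolding hist_def by (simp add: take_Suc_conv_app_nth)
  have e: "Ltot - k + 1 + e = Suc (Ltot - Suc k + 1 + e)" using k by simp
  show ?case unfolding e using pol_hist_pull[OF k] pl hs Suc.hyps(1)[of "Suc k"] Suc.hyps(2) k
    by simp
qed

lemma run_main: "run pol T (Ltot + 1 + e) [] = Some (out T, hist T Ltot)"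
  using run_hist[of 0 T e] by (simp add: hist_def)

lemma hist_len: "length (hist T Ltot) = Ltot" using length_fsn by (simp add: hist_def)

lemma hist_arms: "set (map fst (hist T Ltot)) \<subseteq> S"
  using subsetD[OF surv_sub] length_fsn unfolding hist_def by (auto simp: set_fs set_blk dest!: in_set_takeD)

lemma out_in: "surv T n = {out T}"
proof -
  have "card (surv T n) = 1" using surv_card nn_final by simp
  then obtain x where "surv T n = {x}" by (auto simp: card_Suc_eq)
  then show ?thesis unfolding out_def by simp
qed

end


lemma sum_r1_pow: fixes x :: real assumes "0 \<le> x" "x < 1"
  shows "(\<Sum>r<R. (real r + 1) * x ^ r) \<le> 1 / (1 - x)^2"
proof -
  have eq: "(\<Sum>r<R. (real r + 1) * x ^ r) * (1 - x)^2 = 1 - (real R + 1) * x ^ R + real R * x ^ (R + 1)"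
    by (induction R) (auto simp: power2_eq_square algebra_simps)
  have "(real R + 1) * x ^ R - real R * x ^ (R + 1) = x ^ R * (real R * (1 - x) + 1)"
    by (simp add: algebra_simps)
  moreover have "x ^ R * (real R * (1 - x) + 1) \<ge> 0" using assms by simp
  ultimately have "(\<Sum>r<R. (real r + 1) * x ^ r) * (1 - x)^2 \<le> 1" using eq by linarith
  moreover have "(1 - x)^2 > 0" using assms by simp
  ultimately show ?thesis by (simp add: field_simps)
qed

lemma sum_pow_le: fixes x :: real assumes "0 \<le> x" "x < 1"
  shows "(\<Sum>r<R. x ^ r) \<le> 1 / (1 - x)"
proof -
  have "(\<Sum>r<R. x ^ r) = (1 - x ^ R) / (1 - x)" using assms by (simp add: sum_gp_strict)
  also have "\<dots> \<le> 1 / (1 - x)" using assms by (intro divide_right_mono) auto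
  finally show ?thesis .
qed

lemma nat_ceil_le: fixes x :: real assumes "x \<ge> 0" shows "real (nat \<lceil>x\<rceil>) \<le> x + 1"
proof -
  have "\<lceil>x\<rceil> \<ge> 0" using assms by simp
  then have "real (nat \<lceil>x\<rceil>) = real_of_int \<lceil>x\<rceil>" by simp
  also have "\<dots> \<le> x + 1" by (rule of_int_ceiling_le_add_one)
  finally show ?thesis .
qed

context vprm begin

definition "Lam = ln (1 / \<tau>) + ln (1 / \<delta>)"

lemma Lam_ge: "Lam \<ge> 2 * ln 2" "Lam \<ge> 1"
proof -
  have "ln (1/\<tau>) \<ge> ln 2" using tau by (subst ln_le_cancel_iff) (auto simp: field_simps)
  moreover have "ln (1/\<delta>) \<ge> ln 2" using delta by (subst ln_le_cancel_iff) (auto simp: field_simps)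
  ultimately show "Lam \<ge> 2 * ln 2" unfolding Lam_def by simp
  then show "Lam \<ge> 1" using ln_2_less_1 ln2_ge_two_thirds by linarith
qed

lemma pr_pos: "pr r > 0" unfolding pr_def using tau delta by simp

lemma ln_pr: "ln (1 / pr r) \<le> (real r + 5) * Lam"
proof -
  have t0: "\<tau> > 0" "\<delta> > 0" using tau delta by auto
  have "1 / pr r = 2 ^ (2*r+8) / (\<tau> * \<delta>)" unfolding pr_def by simp
  then have "ln (1 / pr r) = ln (2 ^ (2*r+8)) - ln (\<tau> * \<delta>)" using t0 by (simp add: ln_div)
  also have "\<dots> = real (2*r+8) * ln 2 - (ln \<tau> + ln \<delta>)" using t0 by (simp add: ln_mult ln_realpow)
  also have "ln (1/\<tau>) = - ln \<tau>" "ln (1/\<delta>) = - ln \<delta>" using t0 by (simp_all add: ln_div)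
  ultimately have "ln (1 / pr r) = real (2*r+8) * ln 2 + (ln (1/\<tau>) + ln (1/\<delta>))" by simp
  also have "\<dots> = (real r + 4) * (2 * ln 2) + Lam" unfolding Lam_def by (simp add: algebra_simps)
  also have "\<dots> \<le> (real r + 4) * Lam + Lam" using Lam_ge(1) by (intro add_right_mono mult_left_mono) auto
  finally show ?thesis by (simp add: algebra_simps)
qed

lemma ln_pr_pos: "ln (1 / pr r) > 0"
proof -
  have a: "\<tau> * \<delta> \<le> 1/2 * (1/2)" using tau delta by (intro mult_mono) auto
  have b: "\<tau> * \<delta> / 2 ^ (2 * r + 8) \<le> \<tau> * \<delta> / 1"
    using tau delta by (intro divide_left_mono) auto
  have "pr r \<le> \<tau> * \<delta>" unfolding pr_def using b by simp
  then have "pr r < 1" using a by linarith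
  then show ?thesis using pr_pos by simp
qed

lemma eps_pos: "eps r > 0" unfolding eps_def using phi by simp

lemma m_bound: "real (m r) \<le> (if act r then 800 * (real r + 5) * Lam / \<phi>^2 * (400/361)^r + 1 else 0)"
proof (cases "act r")
  case True
  have "real (m r) = real (nat \<lceil>ln (1 / pr r) / (2 * eps r ^ 2)\<rceil>)" using True unfolding m_def by simp
  also have "\<dots> \<le> ln (1 / pr r) / (2 * eps r ^ 2) + 1"
    using ln_pr_pos[of r] eps_pos[of r] by (intro nat_ceil_le) simp
  also have "ln (1 / pr r) / (2 * eps r ^ 2) = ln (1 / pr r) * (800 / \<phi>^2 * (400/361)^r)"
  proof -
    have e1: "((19/20::real)^r)^2 = ((19/20)^2)^r" by (simp add: power_mult[symmetric] mult.commute)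
    have e2: "((19/20::real)^2)^r = 1 / (400/361)^r" by (simp add: power2_eq_square power_divide)
    have "eps r ^ 2 = \<phi>^2 / 1600 * ((19/20)^r)^2" unfolding eps_def by (simp add: power_mult_distrib power2_eq_square)
    also have "\<dots> = \<phi>^2 / 1600 / (400/361)^r" unfolding e1 e2 by simp
    finally have ee: "eps r ^ 2 = \<phi>^2 / 1600 / (400/361)^r" .
    show ?thesis unfolding ee using phi by (simp add: field_simps)
  qed
  also have "\<dots> \<le> (real r + 5) * Lam * (800 / \<phi>^2 * (400/361)^r)"
    using ln_pr by (intro mult_right_mono) auto
  finally show ?thesis using True by (simp add: field_simps)
qed (simp add: m_def)

lemma Ltot_bound: "real Ltot \<le> 1000000 * real n / \<phi>^2 * Lam"
proof -
  let ?x = "350/361 :: real"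
  have tm: "real (nn r * m r) \<le> 800 * real n * Lam / \<phi>^2 * ((real r + 1) * ?x ^ r + 4 * ?x ^ r) + real n * (7/8)^r" for r
  proof (cases "act r")
    case True
    have a: "real (nn r) \<le> real n * (7/8)^r" by (rule nn_geom[OF True])
    have b: "real (m r) \<le> 800 * (real r + 5) * Lam / \<phi>^2 * (400/361)^r + 1" using m_bound[of r] True by simp
    have "real (nn r * m r) = real (nn r) * real (m r)" by simp
    also have "\<dots> \<le> (real n * (7/8)^r) * (800 * (real r + 5) * Lam / \<phi>^2 * (400/361)^r + 1)"
      using a b by (intro mult_mono) auto
    also have "\<dots> = 800 * real n * Lam / \<phi>^2 * ((real r + 5) * ((7/8)^r * (400/361)^r)) + real n * (7/8)^r"
      by (simp add: algebra_simps add_divide_distrib)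
    also have "(7/8::real)^r * (400/361)^r = ?x ^ r" by (simp add: power_mult_distrib[symmetric])
    finally show ?thesis by (simp add: algebra_simps)
  next
    case False
    then have "m r = 0" unfolding m_def by simp
    moreover have "0 \<le> 800 * real n * Lam / \<phi>^2 * ((real r + 1) * ?x ^ r + 4 * ?x ^ r) + real n * (7/8)^r"
      using Lam_ge by simp
    ultimately show ?thesis by simp
  qed
  have "real Ltot = (\<Sum>r<n. real (nn r * m r))" unfolding Ltot_def by simp
  also have "\<dots> \<le> (\<Sum>r<n. 800 * real n * Lam / \<phi>^2 * ((real r + 1) * ?x ^ r + 4 * ?x ^ r) + real n * (7/8)^r)"
    by (rule sum_mono[OF tm])
  also have "\<dots> = 800 * real n * Lam / \<phi>^2 * ((\<Sum>r<n. (real r + 1) * ?x ^ r) + 4 * (\<Sum>r<n. ?x ^ r)) + real n * (\<Sum>r<n. (7/8::real)^r)"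
  proof -
    define c where "c = 800 * real n * Lam / \<phi>^2"
    define a where "a = (\<lambda>r. (real r + 1) * ?x ^ r)"
    define b where "b = (\<lambda>r. ?x ^ r)"
    define d where "d = (\<lambda>r. (7/8::real) ^ r)"
    have "(\<Sum>r<n. c * (a r + 4 * b r) + real n * d r) = c * ((\<Sum>r<n. a r) + 4 * (\<Sum>r<n. b r)) + real n * (\<Sum>r<n. d r)"
      by (simp add: sum.distrib sum_distrib_left[symmetric])
    then show ?thesis unfolding a_def b_def c_def d_def .
  qed
  also have "\<dots> \<le> 800 * real n * Lam / \<phi>^2 * (1 / (1 - ?x)^2 + 4 * (1 / (1 - ?x))) + real n * (1 / (1 - 7/8))"
    using Lam_ge phi
    by (intro add_mono mult_left_mono sum_r1_pow sum_pow_le) auto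
  also have "\<dots> \<le> 800 * real n * Lam / \<phi>^2 * 1209 + real n * 8"
  proof -
    have "1 / (1 - ?x)^2 + 4 * (1 / (1 - ?x)) \<le> 1209" by (simp add: power2_eq_square)
    moreover have "800 * real n * Lam / \<phi>^2 \<ge> 0" using Lam_ge by simp
    ultimately show ?thesis by (intro add_mono mult_left_mono) auto
  qed
  also have "real n * 8 \<le> 8 * real n / \<phi>^2 * Lam"
  proof -
    have "\<phi>^2 \<le> 1" using phi by (simp add: power_le_one)
    then have "1 \<le> 1 / \<phi>^2" using phi by (simp add: field_simps)
    then have "1 * 1 \<le> 1 / \<phi>^2 * Lam" using Lam_ge by (intro mult_mono) auto
    then have "real n * 8 * 1 \<le> real n * 8 * (1 / \<phi>^2 * Lam)" by (intro mult_left_mono) auto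
    then show ?thesis by (simp add: mult.commute mult.left_commute)
  qed
  finally show ?thesis by (simp add: field_simps)
qed

end


lemma fiber_meas:
  assumes "finite Z" "\<And>T. T \<in> space M \<Longrightarrow> g T \<in> Z" "\<And>z. z \<in> Z \<Longrightarrow> {T\<in>space M. g T = z} \<in> sets M"
    and "\<And>T1 T2. T1 \<in> space M \<Longrightarrow> T2 \<in> space M \<Longrightarrow> g T1 = g T2 \<Longrightarrow> f T1 = f T2"
  shows "{T\<in>space M. f T = y} \<in> sets M"
proof -
  let ?Z = "{z\<in>Z. \<exists>T0\<in>space M. g T0 = z \<and> f T0 = y}"
  have "{T\<in>space M. f T = y} = (\<Union>z\<in>?Z. {T\<in>space M. g T = z})"
  proof
    show "{T\<in>space M. f T = y} \<subseteq> (\<Union>z\<in>?Z. {T\<in>space M. g T = z})"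
    proof
      fix T assume T: "T \<in> {T\<in>space M. f T = y}"
      then have "g T \<in> ?Z" using assms(2) by blast
      then show "T \<in> (\<Union>z\<in>?Z. {T\<in>space M. g T = z})" using T by blast
    qed
    show "(\<Union>z\<in>?Z. {T\<in>space M. g T = z}) \<subseteq> {T\<in>space M. f T = y}"
    proof
      fix T assume "T \<in> (\<Union>z\<in>?Z. {T\<in>space M. g T = z})"
      then obtain z where z: "z \<in> ?Z" "T \<in> {T\<in>space M. g T = z}" by (rule UN_E)
      from z(1) obtain T0 where T0: "T0 \<in> space M" "g T0 = z" "f T0 = y" by blast
      have "f T = f T0" using z(2) T0 by (intro assms(4)) auto
      then show "T \<in> {T\<in>space M. f T = y}" using z(2) T0 by simp
    qed
  qed
  also have "\<dots> \<in> sets M" using assms(1,3) by (intro sets.finite_UN) auto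
  finally show ?thesis .
qed

lemma sets_subset_pattern:
  assumes "finite J" "\<And>j. j \<in> J \<Longrightarrow> A j \<in> sets M"
  shows "{T\<in>space M. {j\<in>J. T \<in> A j} = z} \<in> sets M"
proof -
  have "{T\<in>space M. {j\<in>J. T \<in> A j} = z} =
     (if z \<subseteq> J then space M \<inter> (\<Inter>j\<in>J. if j \<in> z then A j else space M - A j) else {})"
    by (auto split: if_splits)
  also have "\<dots> \<in> sets M"
  proof (cases "z \<subseteq> J")
    case True
    let ?B = "\<lambda>j. if j \<in> z then A j else space M - A j"
    have B: "\<And>j. j \<in> J \<Longrightarrow> ?B j \<in> sets M" using assms by auto
    show ?thesis
    proof (cases "J = {}")
      case True then show ?thesis by simp
    next
      case False
      then have "(\<Inter>j\<in>J. ?B j) \<in> sets M" using assms(1) B by (intro sets.finite_INT) auto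
      then show ?thesis using True by (simp add: sets.Int_space_eq1[OF \<open>(\<Inter>j\<in>J. ?B j) \<in> sets M\<close>])
    qed
  qed simp
  finally show ?thesis .
qed

lemma sets_card_pred:
  assumes "finite J" "\<And>j. j \<in> J \<Longrightarrow> A j \<in> sets M"
  shows "{T\<in>space M. Q {j\<in>J. T \<in> A j}} \<in> sets M"
proof -
  have "{T\<in>space M. (Q {j\<in>J. T \<in> A j}) = True} \<in> sets M"
    by (rule fiber_meas[where Z="Pow J" and g="\<lambda>T. {j\<in>J. T \<in> A j}"])
       (use assms in \<open>auto intro: sets_subset_pattern\<close>)
  then show ?thesis by simp
qed

lemma sum_if_card: "finite J \<Longrightarrow> (\<Sum>j\<in>J. if P j then 1 else 0 :: real) = real (card {j\<in>J. P j})"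
  by (simp add: sum.inter_filter[symmetric])

lemma (in prob_space) count_markov:
  assumes J: "finite J" and MF: "\<And>j. j \<in> J \<Longrightarrow> Mj j \<in> events" "\<And>j. j \<in> J \<Longrightarrow> Fj j \<in> events"
    and ind: "\<And>j. j \<in> J \<Longrightarrow> prob (Mj j \<inter> Fj j) = prob (Mj j) * prob (Fj j)"
    and pF: "\<And>j. j \<in> J \<Longrightarrow> prob (Fj j) \<le> p"
    and cM: "\<And>\<omega>. \<omega> \<in> space M \<Longrightarrow> card {j\<in>J. \<omega> \<in> Mj j} \<le> mm"
    and s: "s > 0" and p0: "p \<ge> 0"
  shows "prob {\<omega>\<in>space M. real (card {j\<in>J. \<omega> \<in> Mj j \<inter> Fj j}) \<ge> s} \<le> real mm * p / s"
proof -
  define u where "u = (\<lambda>\<omega>. \<Sum>j\<in>J. indicator (Mj j \<inter> Fj j) \<omega> :: real)"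
  have u_card: "u \<omega> = real (card {j\<in>J. \<omega> \<in> Mj j \<inter> Fj j})" for \<omega>
  proof -
    have "u \<omega> = (\<Sum>j\<in>J. if \<omega> \<in> Mj j \<inter> Fj j then 1 else 0)" unfolding u_def by (simp add: indicator_def of_bool_def)
    also have "\<dots> = real (card {j\<in>J. \<omega> \<in> Mj j \<inter> Fj j})" using J by (rule sum_if_card)
    finally show ?thesis .
  qed
  have ii: "\<And>A. A \<in> events \<Longrightarrow> integrable M (indicator A :: _ \<Rightarrow> real)"
    by (intro integrable_real_indicator) (auto simp: less_top[symmetric])
  have ie: "\<And>A. A \<in> events \<Longrightarrow> expectation (indicator A :: _ \<Rightarrow> real) = prob A"
    by (simp add: Int_absorb2 sets.sets_into_space)
  have int_u: "integrable M u" unfolding u_def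
    by (rule Bochner_Integration.integrable_sum, rule ii) (use MF in auto)
  have Eu: "expectation u = (\<Sum>j\<in>J. prob (Mj j \<inter> Fj j))"
    unfolding u_def using MF by (subst Bochner_Integration.integral_sum) (auto intro!: ii simp: ie)
  also have "\<dots> \<le> (\<Sum>j\<in>J. prob (Mj j) * p)"
    using ind pF by (intro sum_mono) (auto intro: mult_left_mono)
  also have "\<dots> = p * (\<Sum>j\<in>J. prob (Mj j))" by (simp add: sum_distrib_left mult.commute)
  also have "(\<Sum>j\<in>J. prob (Mj j)) = expectation (\<lambda>\<omega>. \<Sum>j\<in>J. indicator (Mj j) \<omega> :: real)"
    using MF by (subst Bochner_Integration.integral_sum) (auto intro!: ii simp: ie)
  also have "expectation (\<lambda>\<omega>. \<Sum>j\<in>J. indicator (Mj j) \<omega> :: real) \<le> expectation (\<lambda>\<omega>. real mm)"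
  proof (rule integral_mono)
    show "integrable M (\<lambda>\<omega>. \<Sum>j\<in>J. indicator (Mj j) \<omega> :: real)"
      by (rule Bochner_Integration.integrable_sum, rule ii) (use MF in auto)
    show "integrable M (\<lambda>\<omega>. real mm)" by simp
    fix \<omega> assume "\<omega> \<in> space M"
    have "(\<Sum>j\<in>J. indicator (Mj j) \<omega> :: real) = (\<Sum>j\<in>J. if \<omega> \<in> Mj j then 1 else 0)" by (simp add: indicator_def of_bool_def)
    also have "\<dots> = real (card {j\<in>J. \<omega> \<in> Mj j})" using J by (rule sum_if_card)
    also have "\<dots> \<le> real mm" using cM[OF \<open>\<omega> \<in> space M\<close>] by simp
    finally show "(\<Sum>j\<in>J. indicator (Mj j) \<omega> :: real) \<le> real mm" .
  qed
  also have "expectation (\<lambda>\<omega>. real mm) = real mm" by (simp add: prob_space)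
  finally have Eu2: "expectation u \<le> p * real mm" using p0 by (simp add: mult_left_mono)
  have "prob {\<omega>\<in>space M. real (card {j\<in>J. \<omega> \<in> Mj j \<inter> Fj j}) \<ge> s} = prob {\<omega>\<in>space M. s \<le> u \<omega>}"
    using u_card by simp
  also have "\<dots> \<le> expectation u / s"
    using int_u s by (intro integral_Markov_inequality_measure[where A="space M"]) (auto simp: u_def intro!: AE_I2 sum_nonneg)
  also have "\<dots> \<le> real mm * p / s" using Eu2 s by (simp add: divide_right_mono mult.commute)
  finally show ?thesis .
qed


locale bprm = vprm +
  fixes D :: "nat \<Rightarrow> real measure"
  assumes Dps: "\<And>j. j \<in> S \<Longrightarrow> prob_space (D j)"
    and Dsets: "\<And>j. j \<in> S \<Longrightarrow> sets (D j) = sets borel"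
    and Dae: "\<And>j. j \<in> S \<Longrightarrow> AE x in D j. x \<in> {0..1}"
begin

definition "I = S \<times> (UNIV :: nat set)"
definition "Mi = (\<lambda>p :: nat \<times> nat. D (fst p))"
definition "P = PiM I Mi"
definition "th j = mean (D j)"

lemma Mi_ps: "p \<in> I \<Longrightarrow> prob_space (Mi p)" unfolding I_def Mi_def using Dps by auto
lemma Mi_sets: "p \<in> I \<Longrightarrow> sets (Mi p) = sets borel" unfolding I_def Mi_def using Dsets by auto

lemma P_ps: "prob_space P" unfolding P_def by (intro prob_space_PiM Mi_ps)

sublocale PS: prob_space P by (rule P_ps)

lemma coord_meas_gen: "J \<subseteq> I \<Longrightarrow> p \<in> J \<Longrightarrow> (\<lambda>T. T p) \<in> borel_measurable (PiM J Mi)"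
  using measurable_component_singleton[of p J Mi] Mi_sets[of p]
  by (subst measurable_cong_sets[OF refl, of _ "Mi p"]) auto

lemma coord_meas: "p \<in> I \<Longrightarrow> (\<lambda>T. T p) \<in> borel_measurable P"
  unfolding P_def by (rule coord_meas_gen) auto

lemma N_Suc: "N (Suc r) = N r + m r" unfolding N_def by simp

lemma N_mono: "s \<le> r \<Longrightarrow> N s \<le> N r" unfolding N_def by (intro sum_mono2) auto

lemma est_meas:
  assumes "\<And>c. c \<in> {N r..<N r + m r} \<Longrightarrow> (\<lambda>T. T (j, c)) \<in> borel_measurable M"
  shows "(\<lambda>T. est T j r) \<in> borel_measurable M"
  unfolding est_def using assms by (intro borel_measurable_divide borel_measurable_sum) auto

lemma key_meas:
  assumes "\<And>c. c \<in> {N r..<N r + m r} \<Longrightarrow> (\<lambda>T. T (j, c)) \<in> borel_measurable M"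
  shows "(\<lambda>T. key T r j) \<in> borel_measurable M"
  unfolding key_def using est_meas[OF assms] by (intro borel_measurable_times) auto

lemma surv_fiber_meas:
  assumes "\<And>j c. j \<in> S \<Longrightarrow> c < N r \<Longrightarrow> (\<lambda>T. T (j, c)) \<in> borel_measurable M"
  shows "{T\<in>space M. surv T r = A} \<in> sets M"
  using assms
proof (induction r arbitrary: A)
  case 0 then show ?case by (cases "A = S") auto
next
  case (Suc r)
  have cm: "\<And>j c. j \<in> S \<Longrightarrow> c < N r \<Longrightarrow> (\<lambda>T. T (j, c)) \<in> borel_measurable M"
    using Suc.prems N_mono[of r "Suc r"] by auto
  have km: "\<And>j. j \<in> S \<Longrightarrow> (\<lambda>T. key T r j) \<in> borel_measurable M"
    by (rule key_meas) (use Suc.prems in \<open>auto simp: N_Suc\<close>)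
  define pat where "pat = (\<lambda>T. {ij \<in> S \<times> S. key T r (fst ij) < key T r (snd ij)})"
  let ?g = "\<lambda>T. (surv T r, pat T)"
  show ?case
  proof (rule fiber_meas[where Z="Pow S \<times> Pow (S \<times> S)" and g="?g"])
    show "finite (Pow S \<times> Pow (S \<times> S))" using finS by simp
    show "\<And>T. T \<in> space M \<Longrightarrow> ?g T \<in> Pow S \<times> Pow (S \<times> S)" using surv_sub unfolding pat_def by auto
    fix z assume "z \<in> Pow S \<times> Pow (S \<times> S)"
    have a: "{T\<in>space M. surv T r = fst z} \<in> sets M" by (rule Suc.IH[OF cm])
    have b: "{T\<in>space M. {ij \<in> S \<times> S. T \<in> {T\<in>space M. key T r (fst ij) < key T r (snd ij)}} = snd z} \<in> sets M"
      by (rule sets_subset_pattern) (use finS km in \<open>auto intro!: borel_measurable_less\<close>)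
    have "{T\<in>space M. ?g T = z} = {T\<in>space M. surv T r = fst z} \<inter>
        {T\<in>space M. {ij \<in> S \<times> S. T \<in> {T\<in>space M. key T r (fst ij) < key T r (snd ij)}} = snd z}"
      unfolding pat_def by (cases z) auto
    then show "{T\<in>space M. ?g T = z} \<in> sets M" using a b by simp
  next
    fix T1 T2 assume "T1 \<in> space M" "T2 \<in> space M" "?g T1 = ?g T2"
    then have s: "surv T1 r = surv T2 r" and pt: "pat T1 = pat T2" by auto
    have "lowset (key T1 r) (surv T1 r) (q r) = lowset (key T2 r) (surv T1 r) (q r)"
    proof (rule lowset_cong[OF surv_fin])
      fix i j assume "i \<in> surv T1 r" "j \<in> surv T1 r"
      then have "(i, j) \<in> S \<times> S" using surv_sub by auto
      then show "(key T1 r i < key T1 r j) = (key T2 r i < key T2 r j)"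
        using pt unfolding pat_def by (auto simp: set_eq_iff)
    qed
    then show "surv T1 (Suc r) = surv T2 (Suc r)" using s by simp
  qed
qed

lemma I_ne: "I \<noteq> {}" unfolding I_def using neS by auto

lemma coord_rv: "p \<in> I \<Longrightarrow> (\<lambda>T. T p) \<in> measurable P (Mi p)"
  unfolding P_def by (rule measurable_component_singleton)

lemma coord_indep: "PS.indep_vars Mi (\<lambda>p T. T p) I"
proof (subst PS.indep_vars_iff_distr_eq_PiM'[OF I_ne coord_rv])
  have "distr P (PiM I Mi) (\<lambda>x. \<lambda>i\<in>I. x i) = distr P P (\<lambda>x. x)"
    by (rule distr_cong) (auto simp: P_def space_PiM PiE_restrict)
  also have "\<dots> = P" by simp
  also have "P = PiM I (\<lambda>i. distr P (Mi i) (\<lambda>x. x i))"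
    unfolding P_def by (rule PiM_cong) (auto intro!: distr_PiM_component[symmetric] Mi_ps)
  finally show "distr P (PiM I Mi) (\<lambda>x. \<lambda>i\<in>I. x i) = PiM I (\<lambda>i. distr P (Mi i) (\<lambda>x. x i))" .
qed

lemma sub_I: "J \<subseteq> S \<times> UNIV \<Longrightarrow> J \<subseteq> I" unfolding I_def by auto

lemma indep_pair:
  assumes j: "j \<in> S" and Bs: "Bs \<in> sets borel"
  shows "PS.prob ({T\<in>space P. Q (surv T r)} \<inter> {T\<in>space P. est T j r \<in> Bs}) =
    PS.prob {T\<in>space P. Q (surv T r)} * PS.prob {T\<in>space P. est T j r \<in> Bs}"
proof -
  define A1 where "A1 = S \<times> {..<N r}"
  define B1 where "B1 = {j} \<times> {N r..<N r + m r}"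
  have A1I: "A1 \<subseteq> I" and B1I: "B1 \<subseteq> I" unfolding A1_def B1_def I_def using j by auto
  have dis: "A1 \<inter> B1 = {}" unfolding A1_def B1_def by auto
  let ?ra = "\<lambda>\<omega>. restrict (\<lambda>i. \<omega> i) A1"
  let ?rb = "\<lambda>\<omega>. restrict (\<lambda>i. \<omega> i) B1"
  have iv: "PS.indep_var (PiM A1 Mi) ?ra (PiM B1 Mi) ?rb"
    by (rule PS.indep_var_restrict[OF coord_indep dis A1I B1I])
  define Xa where "Xa = {T'\<in>space (PiM A1 Mi). Q (surv T' r)}"
  define Xb where "Xb = {T'\<in>space (PiM B1 Mi). est T' j r \<in> Bs}"
  have Xa: "Xa \<in> sets (PiM A1 Mi)"
  proof -
    have "{T'\<in>space (PiM A1 Mi). Q (surv T' r) = True} \<in> sets (PiM A1 Mi)"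
    proof (rule fiber_meas[where Z="Pow S" and g="\<lambda>T. surv T r"])
      show "finite (Pow S)" using finS by simp
      show "\<And>T. T \<in> space (PiM A1 Mi) \<Longrightarrow> surv T r \<in> Pow S" using surv_sub by auto
      show "\<And>z. z \<in> Pow S \<Longrightarrow> {T\<in>space (PiM A1 Mi). surv T r = z} \<in> sets (PiM A1 Mi)"
        by (rule surv_fiber_meas, rule coord_meas_gen[OF A1I]) (auto simp: A1_def)
    qed auto
    then show ?thesis unfolding Xa_def by simp
  qed
  have Xb: "Xb \<in> sets (PiM B1 Mi)"
  proof -
    have "(\<lambda>T. est T j r) \<in> borel_measurable (PiM B1 Mi)"
      by (rule est_meas, rule coord_meas_gen[OF B1I]) (auto simp: B1_def)
    from measurable_sets[OF this Bs] show ?thesis unfolding Xb_def by (simp add: Int_def conj_commute)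
  qed
  have raM: "?ra \<in> measurable P (PiM A1 Mi)" unfolding P_def using A1I by (simp add: measurable_restrict_subset)
  have rbM: "?rb \<in> measurable P (PiM B1 Mi)" unfolding P_def using B1I by (simp add: measurable_restrict_subset)
  have sa: "surv (?ra T) r = surv T r" for T
  proof (rule surv_cong)
    fix s j' c assume "s < r" "j' \<in> surv T s" "c \<in> {N s..<N s + m s}"
    moreover have "N s + m s \<le> N r" using N_mono[of "Suc s" r] \<open>s < r\<close> by (simp add: N_Suc)
    ultimately show "?ra T (j', c) = T (j', c)" using surv_sub unfolding A1_def by auto
  qed
  have sb: "est (?rb T) j r = est T j r" for T
    by (rule est_cong) (auto simp: B1_def)
  have ea: "?ra -` Xa \<inter> space P = {T\<in>space P. Q (surv T r)}"
    using measurable_space[OF raM] sa unfolding Xa_def by auto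
  have eb: "?rb -` Xb \<inter> space P = {T\<in>space P. est T j r \<in> Bs}"
    using measurable_space[OF rbM] sb unfolding Xb_def by auto
  have eab: "(\<lambda>x. (?ra x, ?rb x)) -` (Xa \<times> Xb) \<inter> space P =
      {T\<in>space P. Q (surv T r)} \<inter> {T\<in>space P. est T j r \<in> Bs}"
    using ea eb by auto
  show ?thesis using PS.indep_varD[OF iv Xa Xb] unfolding eab ea eb .
qed

lemma m_pos: "act r \<Longrightarrow> m r > 0"
proof -
  assume a: "act r"
  have "ln (1 / pr r) / (2 * eps r ^ 2) > 0" using ln_pr_pos[of r] eps_pos[of r] by (intro divide_pos_pos) auto
  then show ?thesis using a unfolding m_def by simp
qed

lemma coordD: "j \<in> S \<Longrightarrow> distr P borel (\<lambda>T. T (j, c)) = D j"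
proof -
  assume j: "j \<in> S"
  have jc: "(j, c) \<in> I" using j unfolding I_def by auto
  have "distr P borel (\<lambda>T. T (j, c)) = distr P (Mi (j, c)) (\<lambda>T. T (j, c))"
    by (rule distr_cong) (use Mi_sets[OF jc] in auto)
  also have "\<dots> = Mi (j, c)" unfolding P_def by (rule distr_PiM_component[OF Mi_ps jc])
  finally show ?thesis by (simp add: Mi_def)
qed

lemma coord_indep_j:
  assumes j: "j \<in> S" and Ic: "Ic \<noteq> {}"
  shows "PS.indep_vars (\<lambda>_. borel) (\<lambda>c T. T (j, c)) Ic"
proof -
  have rv: "(\<lambda>T. T (j, c)) \<in> borel_measurable P" if "c \<in> Ic" for c
    by (rule coord_meas) (use j in \<open>simp add: I_def\<close>)
  show ?thesis
  proof (subst PS.indep_vars_iff_distr_eq_PiM'[OF Ic rv])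
  have "distr P (PiM Ic (\<lambda>_. borel)) (\<lambda>x. \<lambda>i\<in>Ic. x (j, i)) = distr (PiM I Mi) (PiM Ic (\<lambda>i. Mi (Pair j i))) (\<lambda>\<omega>. \<lambda>n\<in>Ic. \<omega> (Pair j n))"
    unfolding P_def by (rule distr_cong) (auto intro!: sets_PiM_cong simp: Mi_def Dsets j)
  also have "\<dots> = PiM Ic (\<lambda>i. Mi (Pair j i))"
    by (rule distr_PiM_reindex) (use j in \<open>auto simp: I_def inj_on_def intro: Mi_ps\<close>)
  also have "\<dots> = PiM Ic (\<lambda>i. distr P borel (\<lambda>T. T (j, i)))"
    by (rule PiM_cong) (auto simp: coordD[OF j] Mi_def)
  finally show "distr P (PiM Ic (\<lambda>_. borel)) (\<lambda>x. \<lambda>i\<in>Ic. x (j, i)) = PiM Ic (\<lambda>i. distr P borel (\<lambda>T. T (j, i)))" .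
  qed
qed

lemma coord_exp: "j \<in> S \<Longrightarrow> PS.expectation (\<lambda>T. T (j, c)) = th j"
proof -
  assume j: "j \<in> S"
  have "PS.expectation (\<lambda>T. T (j, c)) = integral\<^sup>L (distr P borel (\<lambda>T. T (j, c))) (\<lambda>x. x)"
    using j by (subst integral_distr) (auto intro: coord_meas simp: I_def)
  also have "\<dots> = th j" unfolding coordD[OF j] th_def mean_def ..
  finally show ?thesis .
qed

lemma hoeff:
  assumes j: "j \<in> S" and a: "act r"
  shows "PS.prob {T\<in>space P. est T j r \<ge> th j + eps r} \<le> pr r"
    and "PS.prob {T\<in>space P. est T j r \<le> th j - eps r} \<le> pr r"
proof -
  define Ic where "Ic = {N r..<N r + m r}"
  have mp: "m r > 0" by (rule m_pos[OF a])
  have Icn: "Ic \<noteq> {}" and cI: "card Ic = m r" using mp unfolding Ic_def by auto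
  have N0: "N r \<in> Ic" using mp unfolding Ic_def by auto
  interpret H: Hoeffding_ineq_iid P Ic "\<lambda>c T. T (j, c)" "\<lambda>T. T (j, N r)" 0 1 "PS.expectation (\<lambda>T. T (j, N r))"
  proof unfold_locales
    show "finite Ic" unfolding Ic_def by simp
    show "PS.indep_vars (\<lambda>_. borel) (\<lambda>c T. T (j, c)) Ic" by (rule coord_indep_j[OF j Icn])
    show "\<And>i. i \<in> Ic \<Longrightarrow> distr P borel (\<lambda>T. T (j, i)) = distr P borel (\<lambda>T. T (j, N r))"
      using coordD[OF j] by simp
    show "(\<lambda>T. T (j, N r)) \<in> borel_measurable P" using j by (intro coord_meas) (auto simp: I_def)
    have mj: "Mi (j, N r) = D j" by (simp add: Mi_def)
    have ae: "AE x in Mi (j, N r). x \<in> {0..1}" unfolding mj by (rule Dae[OF j])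
    have jI: "(j, N r) \<in> I" using j by (simp add: I_def)
    have "AE x in PiM I Mi. x (j, N r) \<in> {0..1}"
      by (rule AE_PiM_component[where M=Mi and P="\<lambda>x. x \<in> {0..1}", OF Mi_ps jI ae])
    then show "AE x in P. x (j, N r) \<in> {0..1}" unfolding P_def .
  qed simp
  have mu: "PS.expectation (\<lambda>T. T (j, N r)) = th j" by (rule coord_exp[OF j])
  have estE: "est T j r = (\<Sum>c\<in>Ic. T (j, c)) / real (card Ic)" for T unfolding est_def Ic_def by simp
  have expb: "exp (- 2 * real (card Ic) * eps r ^ 2 / (1 - 0)^2) \<le> pr r"
  proof -
    have "real (m r) \<ge> ln (1 / pr r) / (2 * eps r ^ 2)" using a unfolding m_def by simp linarith
    then have "2 * eps r ^ 2 * real (m r) \<ge> ln (1 / pr r)" using eps_pos[of r] by (simp add: field_simps)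
    then have "- 2 * real (card Ic) * eps r ^ 2 / (1 - 0)^2 \<le> ln (pr r)"
      using cI pr_pos[of r] by (simp add: ln_div algebra_simps)
    then have "exp (- 2 * real (card Ic) * eps r ^ 2 / (1 - 0)^2) \<le> exp (ln (pr r))" by simp
    then show ?thesis using pr_pos[of r] by simp
  qed
  show "PS.prob {T\<in>space P. est T j r \<ge> th j + eps r} \<le> pr r"
    using H.Hoeffding_ineq_ge'[of "eps r"] eps_pos[of r] Icn expb unfolding estE mu by simp
  show "PS.prob {T\<in>space P. est T j r \<le> th j - eps r} \<le> pr r"
    using H.Hoeffding_ineq_le'[of "eps r"] eps_pos[of r] Icn expb unfolding estE mu by simp
qed

end


context bprm begin

definition "Mb1 r j = {T\<in>space P. j \<in> surv T r}"
definition "Fb1 r j = {T\<in>space P. est T j r \<in> {x. sg r * th j + eps r < sg r * x}}"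
definition "Mb2 r j = {T\<in>space P. j \<in> lowset (\<lambda>i. - (sg r * th i)) (surv T r) (bb r)}"
definition "Fb2 r j = {T\<in>space P. est T j r \<in> {x. sg r * x < sg r * th j - eps r}}"
definition "Bad1 r = {T\<in>space P. real (tof (nn r)) \<le> real (card {j\<in>S. T \<in> Mb1 r j \<inter> Fb1 r j})}"
definition "Bad2 r = {T\<in>space P. real (beta r) + 1 \<le> real (card {j\<in>S. T \<in> Mb2 r j \<inter> Fb2 r j})}"
definition "Bad = (\<Union>r\<in>{r. r < n \<and> act r}. Bad1 r \<union> Bad2 r)"

lemma surv_pred_meas: "{T\<in>space P. Q (surv T r)} \<in> sets P"
proof -
  have "{T\<in>space P. Q (surv T r) = True} \<in> sets P"
  proof (rule fiber_meas[where Z="Pow S" and g="\<lambda>T. surv T r"])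
    show "finite (Pow S)" using finS by simp
    show "\<And>T. T \<in> space P \<Longrightarrow> surv T r \<in> Pow S" using surv_sub by auto
    show "\<And>z. z \<in> Pow S \<Longrightarrow> {T\<in>space P. surv T r = z} \<in> sets P"
      by (rule surv_fiber_meas, rule coord_meas) (auto simp: I_def)
  qed auto
  then show ?thesis by simp
qed

lemma est_set_meas: "j \<in> S \<Longrightarrow> Bs \<in> sets borel \<Longrightarrow> {T\<in>space P. est T j r \<in> Bs} \<in> sets P"
proof -
  assume j: "j \<in> S" and Bs: "Bs \<in> sets borel"
  have "(\<lambda>T. est T j r) \<in> borel_measurable P"
    by (rule est_meas, rule coord_meas) (use j in \<open>auto simp: I_def\<close>)
  from measurable_sets[OF this Bs] show ?thesis by (simp add: Int_def conj_commute)
qed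

lemma Bs1: "{x::real. a + b < c * x} \<in> sets borel"
  using borel_measurable_less[of "\<lambda>x::real. a + b" borel "\<lambda>x. c * x"] by simp
lemma Bs2: "{x::real. c * x < a - b} \<in> sets borel"
  using borel_measurable_less[of "\<lambda>x::real. c * x" borel "\<lambda>x. a - b"] by simp

lemma ev_meas: "j \<in> S \<Longrightarrow> Mb1 r j \<in> sets P" "j \<in> S \<Longrightarrow> Fb1 r j \<in> sets P"
  "j \<in> S \<Longrightarrow> Mb2 r j \<in> sets P" "j \<in> S \<Longrightarrow> Fb2 r j \<in> sets P"
  unfolding Mb1_def Mb2_def
  by (rule surv_pred_meas, unfold Fb1_def, rule est_set_meas, assumption, rule Bs1,
      rule surv_pred_meas, unfold Fb2_def, rule est_set_meas, assumption, rule Bs2)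

lemma Bad_meas: "Bad1 r \<in> sets P" "Bad2 r \<in> sets P" "Bad \<in> sets P"
proof -
  show b1: "Bad1 r \<in> sets P" for r unfolding Bad1_def
    by (rule sets_card_pred) (use finS ev_meas in auto)
  show b2: "Bad2 r \<in> sets P" for r unfolding Bad2_def
    by (rule sets_card_pred) (use finS ev_meas in auto)
  show "Bad \<in> sets P" unfolding Bad_def using b1 b2 by (intro sets.finite_UN) auto
qed

lemma sg_cases: "sg r = 1 \<or> sg r = -1" unfolding sg_def by auto

lemma probF1: assumes "j \<in> S" "act r" shows "PS.prob (Fb1 r j) \<le> pr r"
proof (cases "sg r = 1")
  case True
  have "Fb1 r j \<subseteq> {T\<in>space P. est T j r \<ge> th j + eps r}" unfolding Fb1_def True by auto
  moreover have "{T\<in>space P. est T j r \<ge> th j + eps r} \<in> sets P"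
    using est_set_meas[OF assms(1), of "{x. th j + eps r \<le> x}"] by (simp add: borel_measurable_le)
  ultimately show ?thesis using hoeff(1)[OF assms] PS.finite_measure_mono by (meson order_trans)
next
  case False
  then have s: "sg r = -1" using sg_cases by auto
  have "Fb1 r j \<subseteq> {T\<in>space P. est T j r \<le> th j - eps r}" unfolding Fb1_def s by auto
  moreover have "{T\<in>space P. est T j r \<le> th j - eps r} \<in> sets P"
    using est_set_meas[OF assms(1), of "{x. x \<le> th j - eps r}"] by (simp add: borel_measurable_le)
  ultimately show ?thesis using hoeff(2)[OF assms] PS.finite_measure_mono by (meson order_trans)
qed

lemma probF2: assumes "j \<in> S" "act r" shows "PS.prob (Fb2 r j) \<le> pr r"
proof (cases "sg r = 1")
  case True
  have "Fb2 r j \<subseteq> {T\<in>space P. est T j r \<le> th j - eps r}" unfolding Fb2_def True by auto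
  moreover have "{T\<in>space P. est T j r \<le> th j - eps r} \<in> sets P"
    using est_set_meas[OF assms(1), of "{x. x \<le> th j - eps r}"] by (simp add: borel_measurable_le)
  ultimately show ?thesis using hoeff(2)[OF assms] PS.finite_measure_mono by (meson order_trans)
next
  case False
  then have s: "sg r = -1" using sg_cases by auto
  have "Fb2 r j \<subseteq> {T\<in>space P. est T j r \<ge> th j + eps r}" unfolding Fb2_def s by auto
  moreover have "{T\<in>space P. est T j r \<ge> th j + eps r} \<in> sets P"
    using est_set_meas[OF assms(1), of "{x. th j + eps r \<le> x}"] by (simp add: borel_measurable_le)
  ultimately show ?thesis using hoeff(1)[OF assms] PS.finite_measure_mono by (meson order_trans)
qed

lemma tof_pos: "tof (nn r) > 0" using tof_bounds[OF nn_pos(1)[of r]] by simp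

lemma prob_Bad1: assumes "act r" shows "PS.prob (Bad1 r) \<le> 8 * pr r"
proof -
  have "PS.prob (Bad1 r) \<le> real (nn r) * pr r / real (tof (nn r))"
    unfolding Bad1_def
  proof (rule PS.count_markov)
    show "finite S" by (rule finS)
    show "\<And>j. j \<in> S \<Longrightarrow> Mb1 r j \<in> PS.events" "\<And>j. j \<in> S \<Longrightarrow> Fb1 r j \<in> PS.events" using ev_meas by auto
    show "PS.prob (Mb1 r j \<inter> Fb1 r j) = PS.prob (Mb1 r j) * PS.prob (Fb1 r j)" if "j \<in> S" for j
      unfolding Mb1_def Fb1_def by (rule indep_pair[OF that Bs1])
    show "\<And>j. j \<in> S \<Longrightarrow> PS.prob (Fb1 r j) \<le> pr r" using probF1 assms by auto
    show "card {j\<in>S. \<omega> \<in> Mb1 r j} \<le> nn r" if "\<omega> \<in> space P" for \<omega>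
    proof -
      have "{j\<in>S. \<omega> \<in> Mb1 r j} = surv \<omega> r" using that surv_sub unfolding Mb1_def by auto
      then show ?thesis using surv_card by simp
    qed
    show "real (tof (nn r)) > 0" using tof_pos by simp
    show "pr r \<ge> 0" using pr_pos[of r] by simp
  qed
  also have "\<dots> \<le> 8 * pr r"
  proof -
    have "8 * tof (nn r) \<ge> nn r" using tof_bounds[OF nn_pos(1)[of r]] by simp
    then have "real (nn r) \<le> 8 * real (tof (nn r))" by linarith
    then show ?thesis using tof_pos[of r] pr_pos[of r] by (simp add: field_simps mult_right_mono)
  qed
  finally show ?thesis .
qed

lemma prob_Bad2: assumes "act r" shows "PS.prob (Bad2 r) \<le> 2 ^ (r + 4) / \<tau> * pr r"
proof -
  have "PS.prob (Bad2 r) \<le> real (bb r) * pr r / (real (beta r) + 1)"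
    unfolding Bad2_def
  proof (rule PS.count_markov)
    show "finite S" by (rule finS)
    show "\<And>j. j \<in> S \<Longrightarrow> Mb2 r j \<in> PS.events" "\<And>j. j \<in> S \<Longrightarrow> Fb2 r j \<in> PS.events" using ev_meas by auto
    show "PS.prob (Mb2 r j \<inter> Fb2 r j) = PS.prob (Mb2 r j) * PS.prob (Fb2 r j)" if "j \<in> S" for j
      unfolding Mb2_def Fb2_def by (rule indep_pair[OF that Bs2])
    show "\<And>j. j \<in> S \<Longrightarrow> PS.prob (Fb2 r j) \<le> pr r" using probF2 assms by auto
    show "card {j\<in>S. \<omega> \<in> Mb2 r j} \<le> bb r" if "\<omega> \<in> space P" for \<omega>
    proof -
      have "{j\<in>S. \<omega> \<in> Mb2 r j} = lowset (\<lambda>i. - (sg r * th i)) (surv \<omega> r) (bb r)"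
        using that surv_sub lowset_subset[OF surv_fin] unfolding Mb2_def by blast
      then show ?thesis using card_lowset[OF surv_fin] by simp
    qed
    show "real (beta r) + 1 > 0" by simp
    show "pr r \<ge> 0" using pr_pos[of r] by simp
  qed
  also have "\<dots> \<le> 2 ^ (r + 4) / \<tau> * pr r"
  proof -
    have "real (bb r) / (real (beta r) + 1) \<le> 2 ^ (r + 4) / \<tau>"
      using beta_bound[of r] by (simp add: divide_le_eq)
    then have "real (bb r) / (real (beta r) + 1) * pr r \<le> 2 ^ (r + 4) / \<tau> * pr r"
      using pr_pos[of r] by (intro mult_right_mono) auto
    then show ?thesis by simp
  qed
  finally show ?thesis .
qed

end


lemma length_filter_sort: "length (filter P (sort xs)) = length (filter P xs)"
  by (metis mset_filter mset_sort size_mset)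

lemma kth_facts:
  fixes f :: "nat \<Rightarrow> real"
  assumes fin: "finite S" and k: "1 \<le> k" "k \<le> card S"
  shows "card {j\<in>S. f j \<ge> kth_largest S f k} \<ge> k"
    and "card {j\<in>S. f j \<le> kth_largest S f k} \<ge> card S - k + 1"
proof -
  define ys where "ys = sort (map f (sorted_list_of_set S))"
  define xs where "xs = rev ys"
  define v where "v = kth_largest S f k"
  have v: "v = xs ! (k - 1)" unfolding v_def kth_largest_def xs_def ys_def ..
  have ly: "length ys = card S" unfolding ys_def using fin by simp
  have lx: "length xs = card S" unfolding xs_def using ly by simp
  have sy: "sorted ys" unfolding ys_def by simp
  have xs_nth: "xs ! i = ys ! (card S - 1 - i)" if "i < card S" for i
    unfolding xs_def using that ly by (simp add: rev_nth)
  have cnt: "card {j\<in>S. Q (f j)} = length (filter Q xs)" for Q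
  proof -
    have "length (filter Q xs) = length (filter Q ys)" unfolding xs_def by (simp add: rev_filter[symmetric])
    also have "\<dots> = length (filter Q (map f (sorted_list_of_set S)))" unfolding ys_def by (rule length_filter_sort)
    also have "\<dots> = length (filter (Q \<circ> f) (sorted_list_of_set S))" by (simp add: filter_map)
    also have "\<dots> = card ({x. (Q \<circ> f) x} \<inter> set (sorted_list_of_set S))"
      by (rule distinct_length_filter) simp
    also have "\<dots> = card {j\<in>S. Q (f j)}" using fin by (simp add: Int_def conj_commute)
    finally show ?thesis by simp
  qed
  have mono: "xs ! i \<ge> xs ! i'" if "i \<le> i'" "i' < card S" for i i'
  proof -
    have "ys ! (card S - 1 - i') \<le> ys ! (card S - 1 - i)"
      using sy that ly by (intro sorted_nth_mono) auto
    then show ?thesis using xs_nth that by simp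
  qed
  have lf: "length (filter Q xs) \<ge> length (filter Q zs)" if "xs = zs @ ws \<or> xs = ws @ zs" for Q zs ws
    using that by auto
  show "card {j\<in>S. f j \<ge> kth_largest S f k} \<ge> k"
  proof -
    have all: "\<forall>x\<in>set (take k xs). x \<ge> v"
    proof
      fix x assume "x \<in> set (take k xs)"
      then obtain i where i: "i < length (take k xs)" "x = take k xs ! i" by (metis in_set_conv_nth)
      then have "i \<le> k - 1" "x = xs ! i" by auto
      then show "x \<ge> v" unfolding v using mono k lx by auto
    qed
    have "k = length (filter (\<lambda>x. x \<ge> v) (take k xs))" using all k lx by (simp add: filter_id_conv)
    also have "\<dots> \<le> length (filter (\<lambda>x. x \<ge> v) xs)" by (rule lf[where ws="drop k xs"]) simp
    also have "\<dots> = card {j\<in>S. f j \<ge> v}" using cnt[of "\<lambda>x. x \<ge> v"] by simp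
    finally show ?thesis unfolding v_def .
  qed
  show "card {j\<in>S. f j \<le> kth_largest S f k} \<ge> card S - k + 1"
  proof -
    have all: "\<forall>x\<in>set (drop (k - 1) xs). x \<le> v"
    proof
      fix x assume "x \<in> set (drop (k - 1) xs)"
      then obtain i where i: "i < length (drop (k - 1) xs)" "x = drop (k - 1) xs ! i" by (metis in_set_conv_nth)
      then have "x = xs ! (k - 1 + i)" "k - 1 + i < card S" using lx k by auto
      then show "x \<le> v" unfolding v using mono by auto
    qed
    have "card S - k + 1 = length (filter (\<lambda>x. x \<le> v) (drop (k - 1) xs))"
      using all k lx by (simp add: filter_id_conv)
    also have "\<dots> \<le> length (filter (\<lambda>x. x \<le> v) xs)" by (rule lf[where ws="take (k - 1) xs"]) simp
    also have "\<dots> = card {j\<in>S. f j \<le> v}" using cnt[of "\<lambda>x. x \<le> v"] by simp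
    finally show ?thesis unfolding v_def .
  qed
qed

context bprm begin

lemma prob_Bad: "PS.prob Bad \<le> \<delta> / 4"
proof -
  let ?R = "{r. r < n \<and> act r}"
  have finR: "finite ?R" by simp
  have "PS.prob Bad \<le> (\<Sum>r\<in>?R. PS.prob (Bad1 r \<union> Bad2 r))"
    unfolding Bad_def by (rule measure_subadditive_finite) (use Bad_meas in auto)
  also have "\<dots> \<le> (\<Sum>r\<in>?R. \<delta> / 8 * (1/2)^r)"
  proof (rule sum_mono)
    fix r assume "r \<in> ?R"
    then have a: "act r" by simp
    have "PS.prob (Bad1 r \<union> Bad2 r) \<le> PS.prob (Bad1 r) + PS.prob (Bad2 r)"
      by (rule measure_subadditive) (use Bad_meas in auto)
    also have "\<dots> \<le> 8 * pr r + 2 ^ (r + 4) / \<tau> * pr r" using prob_Bad1[OF a] prob_Bad2[OF a] by simp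
    also have "\<dots> \<le> 2 ^ (r + 4) / \<tau> * pr r + 2 ^ (r + 4) / \<tau> * pr r"
    proof -
      have "(16::real) \<le> 2 ^ (r + 4)" using power_increasing[of 4 "r+4" "2::real"] by simp
      also have "(2::real) ^ (r + 4) \<le> 2 ^ (r + 4) / \<tau>" using tau by (simp add: field_simps)
      finally have "8 \<le> 2 ^ (r + 4) / \<tau>" by simp
      then show ?thesis using pr_pos[of r] by (intro add_right_mono mult_right_mono) auto
    qed
    also have "\<dots> = \<delta> / 8 * (1/2)^r"
    proof -
      have h2: "(2::real) ^ (r * 2) = 2 ^ r * 2 ^ r" by (simp add: power_mult power2_eq_square)
      show ?thesis using h2 unfolding pr_def using tau
        by (simp add: field_simps power_add power_mult_distrib power_divide power_mult[symmetric] mult.commute)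
    qed
    finally show "PS.prob (Bad1 r \<union> Bad2 r) \<le> \<delta> / 8 * (1/2)^r" .
  qed
  also have "\<dots> \<le> (\<Sum>r<n. \<delta> / 8 * (1/2)^r)" using delta by (intro sum_mono2) auto
  also have "\<dots> = \<delta> / 8 * (\<Sum>r<n. (1/2::real)^r)" by (simp add: sum_distrib_left)
  also have "\<dots> \<le> \<delta> / 8 * (1 / (1 - 1/2))" using delta by (intro mult_left_mono sum_pow_le) auto
  finally show ?thesis by simp
qed

end


context vprm begin

lemma sch_step:
  assumes "act r"
  shows "isbot r \<Longrightarrow> Bv (Suc r) = Bv r - beta r \<and> Cv (Suc r) = Cv r - q r"
    and "\<not> isbot r \<Longrightarrow> Bv (Suc r) = Bv r - q r \<and> Cv (Suc r) = Cv r - beta r"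
proof -
  have s: "sch (Suc r) = stp (nn r, Bv r, Cv r, Sv r)" by (simp add: sch_Suc sch_tuple[symmetric])
  have qq: "q r = qof (nn r, Bv r, Cv r, Sv r)" by (simp add: q_def sch_tuple[symmetric])
  have n2: "\<not> nn r \<le> 1" using assms unfolding act_def by simp
  show "isbot r \<Longrightarrow> Bv (Suc r) = Bv r - beta r \<and> Cv (Suc r) = Cv r - q r"
    using s qq n2 unfolding isbot_def beta_def by (simp add: Bv_def[of "Suc r"] Cv_def[of "Suc r"] stp_def)
  show "\<not> isbot r \<Longrightarrow> Bv (Suc r) = Bv r - q r \<and> Cv (Suc r) = Cv r - beta r"
    using s qq n2 unfolding isbot_def beta_def by (simp add: Bv_def[of "Suc r"] Cv_def[of "Suc r"] stp_def)
qed

lemma q_bounds: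
  assumes "act r"
  shows "isbot r \<Longrightarrow> q r + Bv r + tof (nn r) \<le> nn r + 1"
    and "\<not> isbot r \<Longrightarrow> q r + Cv r + tof (nn r) \<le> nn r + 1"
proof -
  have qq: "q r = qof (nn r, Bv r, Cv r, Sv r)" by (simp add: q_def sch_tuple[symmetric])
  have si: "sinv K (nn r, Bv r, Cv r, Sv r)" using sinv_sch[of r] by (simp add: sch_tuple)
  have n2: "nn r \<ge> 2" using assms unfolding act_def by simp
  show "isbot r \<Longrightarrow> q r + Bv r + tof (nn r) \<le> nn r + 1"
    using qof_bot(1)[OF si n2] qq unfolding isbot_def by simp
  show "\<not> isbot r \<Longrightarrow> q r + Cv r + tof (nn r) \<le> nn r + 1"
    using qof_top(1)[OF si n2] qq unfolding isbot_def by simp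
qed

lemma q_idle: "\<not> act r \<Longrightarrow> q r = 0" unfolding q_def act_def nn_def qof_def by (cases "sch r") auto

lemma BC_idle: "\<not> act r \<Longrightarrow> Bv (Suc r) = Bv r \<and> Cv (Suc r) = Cv r"
  using sch_Suc_idle unfolding Bv_def Cv_def by simp

lemma Bv0: "Bv 0 = Kp + S0" and Cv0: "Cv 0 = n - Kp + 1"
  unfolding Bv_def Cv_def sch_def init_def by simp_all

lemma sum_eps: "(\<Sum>s<r. 2 * eps s) \<le> \<phi>"
proof -
  have "(\<Sum>s<r. 2 * eps s) = \<phi> / 20 * (\<Sum>s<r. (19/20::real)^s)"
    unfolding eps_def by (simp add: sum_distrib_left)
  also have "\<dots> \<le> \<phi> / 20 * (1 / (1 - 19/20))" using phi by (intro mult_left_mono sum_pow_le) auto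
  finally show ?thesis by simp
qed

end

lemma card_mono_filter: "finite A \<Longrightarrow> (\<And>j. j \<in> A \<Longrightarrow> P j \<Longrightarrow> Q j) \<Longrightarrow> card {j\<in>A. P j} \<le> card {j\<in>A. Q j}"
  by (intro card_mono) auto

context bprm begin

definition "Lr r = kth_largest S th K - (\<Sum>s<r. 2 * eps s)"
definition "Ur r = kth_largest S th Kp + (\<Sum>s<r. 2 * eps s)"

lemma Lr_Suc: "Lr (Suc r) = Lr r - 2 * eps r" unfolding Lr_def by simp
lemma Ur_Suc: "Ur (Suc r) = Ur r + 2 * eps r" unfolding Ur_def by simp

lemma invariant:
  assumes T: "T \<in> space P" "T \<notin> Bad"
  shows "r \<le> n \<Longrightarrow> Bv r \<le> card {j\<in>surv T r. Lr r \<le> th j} \<and> Cv r \<le> card {j\<in>surv T r. th j \<le> Ur r}"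
proof (induction r)
  case 0
  have K: "1 \<le> K" "K \<le> card S" using K1 Kn by auto
  have Kp: "1 \<le> Kp" "Kp \<le> card S" using Kp_bounds Kn by auto
  have "Bv 0 \<le> K" using nn_pos(8) .
  also have "K \<le> card {j\<in>S. kth_largest S th K \<le> th j}" using kth_facts(1)[OF finS K] .
  finally have a: "Bv 0 \<le> card {j\<in>surv T 0. Lr 0 \<le> th j}" unfolding Lr_def by simp
  have "Cv 0 = card S - Kp + 1" unfolding Cv0 n_def ..
  also have "\<dots> \<le> card {j\<in>S. th j \<le> kth_largest S th Kp}" using kth_facts(2)[OF finS Kp] .
  finally have b: "Cv 0 \<le> card {j\<in>surv T 0. th j \<le> Ur 0}" unfolding Ur_def by simp
  show ?case using a b by simp
next
  case (Suc r)
  then have rn: "r < n" by simp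
  have IH: "Bv r \<le> card {j\<in>surv T r. Lr r \<le> th j}" "Cv r \<le> card {j\<in>surv T r. th j \<le> Ur r}"
    using Suc by auto
  define A where "A = surv T r"
  have finA: "finite A" and cA: "card A = nn r" and AS: "A \<subseteq> S" unfolding A_def using surv_fin surv_card surv_sub by auto
  have eps0: "eps r \<ge> 0" using eps_pos[of r] by simp
  have sv: "surv T (Suc r) = A - lowset (key T r) A (q r)" unfolding A_def by simp
  have cR: "card (lowset (key T r) A (q r)) \<le> q r" using card_lowset[OF finA] by simp
  have Rsub: "lowset (key T r) A (q r) \<subseteq> A" by (rule lowset_subset[OF finA])
  show ?case
  proof (cases "act r")
    case False
    have q0: "q r = 0" by (rule q_idle[OF False])
    have "lowset (key T r) A (q r) = {}" unfolding q0 lowset_def by simp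
    then have sv0: "surv T (Suc r) = A" using sv by simp
    have "card {j\<in>A. Lr r \<le> th j} \<le> card {j\<in>A. Lr (Suc r) \<le> th j}"
      using finA eps0 by (intro card_mono_filter) (auto simp: Lr_Suc)
    moreover have "card {j\<in>A. th j \<le> Ur r} \<le> card {j\<in>A. th j \<le> Ur (Suc r)}"
      using finA eps0 by (intro card_mono_filter) (auto simp: Ur_Suc)
    ultimately show ?thesis using IH BC_idle[OF False] sv0 unfolding A_def by simp
  next
    case True
    have rR: "r \<in> {r. r < n \<and> act r}" using rn True by simp
    have nb1: "T \<notin> Bad1 r" and nb2: "T \<notin> Bad2 r" using T rR unfolding Bad_def by auto
    have e1set: "{j\<in>S. T \<in> Mb1 r j \<inter> Fb1 r j} = {j\<in>A. sg r * th j + eps r < key T r j}"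
      using T(1) AS unfolding Mb1_def Fb1_def A_def key_def by auto
    have e1: "card {j\<in>A. sg r * th j + eps r < key T r j} < tof (nn r)"
    proof -
      have "\<not> real (tof (nn r)) \<le> real (card {j\<in>S. T \<in> Mb1 r j \<inter> Fb1 r j})"
        using nb1 T(1) unfolding Bad1_def by blast
      then show ?thesis unfolding e1set by simp
    qed
    have e2set: "{j\<in>S. T \<in> Mb2 r j \<inter> Fb2 r j} = {j \<in> lowset (\<lambda>i. - (sg r * th i)) A (bb r). key T r j < sg r * th j - eps r}"
      using T(1) AS lowset_subset[OF finA, of "\<lambda>i. - (sg r * th i)" "bb r"] unfolding Mb2_def Fb2_def A_def key_def by auto
    have e2: "card {j \<in> lowset (\<lambda>i. - (sg r * th i)) A (bb r). key T r j < sg r * th j - eps r} \<le> beta r"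
    proof -
      have "\<not> real (beta r) + 1 \<le> real (card {j\<in>S. T \<in> Mb2 r j \<inter> Fb2 r j})"
        using nb2 T(1) unfolding Bad2_def by blast
      then show ?thesis unfolding e2set by simp
    qed
    show ?thesis
    proof (cases "isbot r")
      case bot: True
      have sg1: "sg r = 1" using bot unfolding sg_def by simp
      have bbB: "bb r = Bv r" using bot unfolding bb_def by simp
      have st: "Bv (Suc r) = Bv r - beta r" "Cv (Suc r) = Cv r - q r" using sch_step(1)[OF True bot] by auto
      have qb: "q r + Bv r + tof (nn r) \<le> card A + 1" using q_bounds(1)[OF True bot] cA by simp
      have hi: "card {j\<in>A. Lr r \<le> sg r * th j} \<ge> Bv r" using IH(1) sg1 unfolding A_def by simp
      have "card {j \<in> A - lowset (key T r) A (q r). Lr r - 2 * eps r \<le> sg r * th j} \<ge> Bv r - beta r"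
        by (rule step_bottom[OF finA qb _ hi _ _ eps0])
           (use nn_pos(3)[of r] cA e1 e2 bbB in auto)
      then have a: "Bv (Suc r) \<le> card {j\<in>surv T (Suc r). Lr (Suc r) \<le> th j}"
        using st sg1 sv Lr_Suc by simp
      have "card {j\<in>A. th j \<le> Ur r} - q r \<le> card {j\<in>A - lowset (key T r) A (q r). th j \<le> Ur r}"
        by (rule card_diff_filter_ge[OF finA Rsub cR])
      also have "\<dots> \<le> card {j\<in>A - lowset (key T r) A (q r). th j \<le> Ur (Suc r)}"
        using finA eps0 by (intro card_mono_filter) (auto simp: Ur_Suc)
      finally have "Cv r - q r \<le> card {j\<in>A - lowset (key T r) A (q r). th j \<le> Ur (Suc r)}"
        using IH(2) unfolding A_def by arith
      then have b: "Cv (Suc r) \<le> card {j\<in>surv T (Suc r). th j \<le> Ur (Suc r)}"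
        unfolding st sv .
      show ?thesis using a b by simp
    next
      case top: False
      have sg1: "sg r = -1" using top unfolding sg_def by simp
      have bbC: "bb r = Cv r" using top unfolding bb_def by simp
      have st: "Bv (Suc r) = Bv r - q r" "Cv (Suc r) = Cv r - beta r" using sch_step(2)[OF True top] by auto
      have qb: "q r + Cv r + tof (nn r) \<le> card A + 1" using q_bounds(2)[OF True top] cA by simp
      have eqc: "{j\<in>A. - Ur r \<le> sg r * th j} = {j\<in>A. th j \<le> Ur r}" using sg1 by auto
      have hi: "card {j\<in>A. - Ur r \<le> sg r * th j} \<ge> Cv r" using IH(2) unfolding A_def[symmetric] eqc .
      have "card {j \<in> A - lowset (key T r) A (q r). - Ur r - 2 * eps r \<le> sg r * th j} \<ge> Cv r - beta r"
        by (rule step_bottom[OF finA qb _ hi _ _ eps0])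
           (use nn_pos(5)[of r] cA e1 e2 bbC in auto)
      moreover have "{j \<in> A - lowset (key T r) A (q r). - Ur r - 2 * eps r \<le> sg r * th j} =
          {j\<in>surv T (Suc r). th j \<le> Ur (Suc r)}"
        using sg1 sv Ur_Suc by auto
      ultimately have b: "Cv (Suc r) \<le> card {j\<in>surv T (Suc r). th j \<le> Ur (Suc r)}"
        using st by simp
      have "card {j\<in>A. Lr r \<le> th j} - q r \<le> card {j\<in>A - lowset (key T r) A (q r). Lr r \<le> th j}"
        by (rule card_diff_filter_ge[OF finA Rsub cR])
      also have "\<dots> \<le> card {j\<in>A - lowset (key T r) A (q r). Lr (Suc r) \<le> th j}"
        using finA eps0 by (intro card_mono_filter) (auto simp: Lr_Suc)
      finally have "Bv r - q r \<le> card {j\<in>A - lowset (key T r) A (q r). Lr (Suc r) \<le> th j}"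
        using IH(1) unfolding A_def by arith
      then have a: "Bv (Suc r) \<le> card {j\<in>surv T (Suc r). Lr (Suc r) \<le> th j}"
        unfolding st sv .
      show ?thesis using a b by simp
    qed
  qed
qed

lemma success:
  assumes T: "T \<in> space P" "T \<notin> Bad"
  shows "out T \<in> S \<and> kth_largest S th K - \<phi> \<le> th (out T) \<and> th (out T) \<le> kth_largest S th Kp + \<phi>"
proof -
  have inv: "Bv n \<le> card {j\<in>surv T n. Lr n \<le> th j}" "Cv n \<le> card {j\<in>surv T n. th j \<le> Ur n}"
    using invariant[OF T, of n] by auto
  have o: "surv T n = {out T}" by (rule out_in)
  have s1: "{j\<in>{out T}. Lr n \<le> th j} = (if Lr n \<le> th (out T) then {out T} else {})" by auto
  have s2: "{j\<in>{out T}. th j \<le> Ur n} = (if th (out T) \<le> Ur n then {out T} else {})" by auto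
  have "Lr n \<le> th (out T)" using inv(1) nn_pos(2)[of n] unfolding o s1 by (cases "Lr n \<le> th (out T)") auto
  moreover have "th (out T) \<le> Ur n" using inv(2) nn_pos(4)[of n] unfolding o s2 by (cases "th (out T) \<le> Ur n") auto
  moreover have "out T \<in> S" using o surv_sub[of T n] by auto
  ultimately show ?thesis using sum_eps[of n] unfolding Lr_def Ur_def by auto
qed

end


context bprm begin

lemma success_set_meas: "{T\<in>space P. G (out T)} \<in> sets P"
proof -
  have "{T\<in>space P. G (out T) = True} \<in> sets P"
  proof (rule fiber_meas[where Z="Pow S" and g="\<lambda>T. surv T n"])
    show "finite (Pow S)" using finS by simp
    show "\<And>T. T \<in> space P \<Longrightarrow> surv T n \<in> Pow S" using surv_sub by auto
    show "\<And>z. z \<in> Pow S \<Longrightarrow> {T\<in>space P. surv T n = z} \<in> sets P"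
      by (rule surv_fiber_meas, rule coord_meas) (auto simp: I_def)
    show "\<And>T1 T2. T1 \<in> space P \<Longrightarrow> T2 \<in> space P \<Longrightarrow> surv T1 n = surv T2 n \<Longrightarrow> G (out T1) = G (out T2)"
      unfolding out_def by simp
  qed
  then show ?thesis by simp
qed

lemma final_prob:
  "PS.prob {T\<in>space P. out T \<in> S \<and> kth_largest S th K - \<phi> \<le> th (out T) \<and> th (out T) \<le> kth_largest S th Kp + \<phi>}
    \<ge> 1 - \<delta>"
proof -
  let ?E = "{T\<in>space P. out T \<in> S \<and> kth_largest S th K - \<phi> \<le> th (out T) \<and> th (out T) \<le> kth_largest S th Kp + \<phi>}"
  have sub: "space P - Bad \<subseteq> ?E" using success by auto
  have "PS.prob (space P - Bad) = 1 - PS.prob Bad" using Bad_meas(3) by (rule PS.prob_compl)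
  also have "\<dots> \<ge> 1 - \<delta>" using prob_Bad delta by simp
  finally have "1 - \<delta> \<le> PS.prob (space P - Bad)" .
  also have "\<dots> \<le> PS.prob ?E" using sub success_set_meas by (intro PS.finite_measure_mono) auto
  finally show ?thesis .
qed

lemma bandit_eq: "bandit_space S D = uniform_measure lborel {0..1} \<Otimes>\<^sub>M P"
  unfolding bandit_space_def P_def I_def Mi_def ..

lemma pair_measure_eq:
  assumes "B \<in> sets P"
  shows "measure (uniform_measure lborel {0..1::real} \<Otimes>\<^sub>M P) (space (uniform_measure lborel {0..1::real}) \<times> B) = PS.prob B"
proof -
  let ?U = "uniform_measure lborel {0..1::real}"
  have U: "prob_space ?U" by (rule prob_space_uniform_measure) auto
  have "emeasure (?U \<Otimes>\<^sub>M P) (space ?U \<times> B) = emeasure ?U (space ?U) * emeasure P B"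
    using assms by (intro PS.emeasure_pair_measure_Times) auto
  also have "\<dots> = emeasure P B" using prob_space.emeasure_space_1[OF U] by simp
  finally have eq: "emeasure (?U \<Otimes>\<^sub>M P) (space ?U \<times> B) = emeasure P B" .
  show ?thesis unfolding measure_def eq ..
qed

end

lemma main_inst:
  fixes S :: "nat set" and D :: "nat \<Rightarrow> real measure" and K :: nat and \<tau> \<phi> \<delta> :: real
  assumes H: "finite S \<and> S \<noteq> {} \<and>
       (\<forall>j\<in>S. prob_space (D j) \<and> sets (D j) = sets borel \<and> (AE x in D j. x \<in> {0..1})) \<and>
       1 \<le> K \<and> K \<le> card S \<and>
       0 < \<tau> \<and> \<tau> \<le> 1/2 \<and> (1 - \<tau>) * K \<ge> 1 \<and>
       0 < \<phi> \<and> \<phi> \<le> 1 \<and> 0 < \<delta> \<and> \<delta> \<le> 1/2"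
  shows "let B = 1000000 * real (card S) / \<phi>^2 * (ln (1/\<tau>) + ln (1/\<delta>));
            fuel = nat \<lceil>B\<rceil> + 1;
            \<theta> = (\<lambda>j. mean (D j));
            lo = kth_largest S \<theta> K - \<phi>;
            hi = kth_largest S \<theta> (nat \<lceil>(1 - \<tau>) * real K\<rceil>) + \<phi>
        in (\<forall>u::real\<in>{0..1}. \<forall>T :: nat \<times> nat \<Rightarrow> real. (\<forall>p. T p \<in> {0..1}) \<longrightarrow>
              (case run (prm.pol S K \<tau> \<phi> \<delta>) T fuel [] of
                 None \<Rightarrow> False
               | Some (i, h) \<Rightarrow> real (length h) \<le> B \<and> set (map fst h) \<subseteq> S))
           \<and> measure (bandit_space S D)
               {(u, T) \<in> space (bandit_space S D).
                  case run (prm.pol S K \<tau> \<phi> \<delta>) T fuel [] of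
                    None \<Rightarrow> False
                  | Some (i, h) \<Rightarrow> i \<in> S \<and> lo \<le> \<theta> i \<and> \<theta> i \<le> hi}
             \<ge> 1 - \<delta>"
proof -
  have vp: "vprm S K \<tau> \<phi> \<delta>" by unfold_locales (use H in auto)
  have ba: "bprm_axioms S D" by (rule bprm_axioms.intro) (use H in auto)
  interpret bprm S K \<tau> \<phi> \<delta> D by (rule bprm.intro[OF vp ba])
  define B where "B = 1000000 * real (card S) / \<phi>^2 * (ln (1/\<tau>) + ln (1/\<delta>))"
  have LB: "real Ltot \<le> B" using Ltot_bound unfolding B_def n_def Lam_def .
  then have LB2: "Ltot \<le> nat \<lceil>B\<rceil>" by linarith
  have fuel: "nat \<lceil>B\<rceil> + 1 = Ltot + 1 + (nat \<lceil>B\<rceil> - Ltot)" using LB2 by simp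
  have run: "run (pol) T (nat \<lceil>B\<rceil> + 1) [] = Some (out T, hist T Ltot)" for T
    unfolding fuel by (rule run_main)
  have thdef: "(\<lambda>j. mean (D j)) = th" unfolding th_def ..
  have Kpdef: "nat \<lceil>(1 - \<tau>) * real K\<rceil> = Kp" unfolding Kp_def ..
  have part1: "\<forall>u\<in>{0..1::real}. \<forall>T :: nat \<times> nat \<Rightarrow> real. (\<forall>p. T p \<in> {0..1}) \<longrightarrow>
            (case run pol T (nat \<lceil>B\<rceil> + 1) [] of
               None \<Rightarrow> False
             | Some (i, h) \<Rightarrow> real (length h) \<le> B \<and> set (map fst h) \<subseteq> S)"
    using run hist_len hist_arms LB by simp
  let ?G = "\<lambda>i. i \<in> S \<and> kth_largest S th K - \<phi> \<le> th i \<and> th i \<le> kth_largest S th Kp + \<phi>"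
  have seteq: "{(u, T) \<in> space (bandit_space S D).
                case run pol T (nat \<lceil>B\<rceil> + 1) [] of None \<Rightarrow> False | Some (i, h) \<Rightarrow> ?G i}
        = space (uniform_measure lborel {0..1::real}) \<times> {T\<in>space P. ?G (out T)}"
    unfolding bandit_eq using run by (auto simp: space_pair_measure)
  have part2: "measure (bandit_space S D) {(u, T) \<in> space (bandit_space S D).
                case run pol T (nat \<lceil>B\<rceil> + 1) [] of None \<Rightarrow> False | Some (i, h) \<Rightarrow> ?G i} \<ge> 1 - \<delta>"
    unfolding seteq using final_prob pair_measure_eq[OF success_set_meas[of ?G]] unfolding bandit_eq by simp
  show ?thesis
    unfolding Let_def thdef Kpdef B_def[symmetric] by (rule conjI[OF part1 part2])
qed

theorem theorem3p1:
  "\<exists>C::real. C > 0 \<and> (\<exists>alg :: algorithm.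
     \<forall>(S::nat set) (D::nat \<Rightarrow> real measure) (K::nat) (\<tau>::real) (\<phi>::real) (\<delta>::real).
       finite S \<and> S \<noteq> {} \<and>
       (\<forall>j\<in>S. prob_space (D j) \<and> sets (D j) = sets borel \<and> (AE x in D j. x \<in> {0..1})) \<and>
       1 \<le> K \<and> K \<le> card S \<and>
       0 < \<tau> \<and> \<tau> \<le> 1/2 \<and> (1 - \<tau>) * K \<ge> 1 \<and>
       0 < \<phi> \<and> \<phi> \<le> 1 \<and> 0 < \<delta> \<and> \<delta> \<le> 1/2
       \<longrightarrow>
       (let B = C * card S / \<phi>^2 * (ln (1/\<tau>) + ln (1/\<delta>));
            fuel = nat \<lceil>B\<rceil> + 1;
            \<theta> = (\<lambda>j. mean (D j));
            lo = kth_largest S \<theta> K - \<phi>;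
            hi = kth_largest S \<theta> (nat \<lceil>(1 - \<tau>) * K\<rceil>) + \<phi>
        in (\<forall>u\<in>{0..1}. \<forall>T :: nat \<times> nat \<Rightarrow> real. (\<forall>p. T p \<in> {0..1}) \<longrightarrow>
              (case run (alg S K \<tau> \<phi> \<delta> u) T fuel [] of
                 None \<Rightarrow> False
               | Some (i, h) \<Rightarrow> real (length h) \<le> B \<and> set (map fst h) \<subseteq> S))
           \<and> measure (bandit_space S D)
               {(u, T) \<in> space (bandit_space S D).
                  case run (alg S K \<tau> \<phi> \<delta> u) T fuel [] of
                    None \<Rightarrow> False
                  | Some (i, h) \<Rightarrow> i \<in> S \<and> lo \<le> \<theta> i \<and> \<theta> i \<le> hi}
             \<ge> 1 - \<delta>))"
  apply (intro exI[of _ "1000000::real"] conjI exI[of _ "\<lambda>S K \<tau> \<phi> \<delta> (u::real). prm.pol S K \<tau> \<phi> \<delta>"] allI impI)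
   apply simp
  apply (rule main_inst)
  apply assumption
  done


end
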